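(* Let $(\mathcal{M},\times,1)$ be a cartesian monoidal category with equivalences. Then there is an isomorphism of categories \[ \mathrm{HtyAlg}(\mathbf{Mon},\mathcal{M})\;\cong\;\mathbf{Special}((\Delta^+)^{\mathrm{op}},\mathcal{M}). \]
   Context: A monoidal category with equivalences is a monoidal category with a class of morphisms (equivalences) containing all isomorphisms, satisfying two-out-of-three for composition, and closed under $\otimes$; cartesian means the monoidal structure is given by chosen finite products. $\Delta$: objects $n=\{0,\dots,n-1\}$ ($n\ge0$), order-preserving maps, monoidal under ordinal sum $+$ with unit $0$. $\mathrm{HtyAlg}(\mathbf{Mon},\mathcal{M})$ (homotopy monoids in $\mathcal{M}$) is the category whose objects are colax monoidal functors $(X,\xi):(\Delta,+,0)\to(\mathcal{M},\times,1)$ (functor $X$ with natural, not necessarily invertible maps $\xi_{m,n}:X(m+n)\to X(m)\times X(n)$, $\xi_0:X(0)\to1$ satisfying coassociativity and counit axioms) with $\xi_0$ and all $\xi_{m,n}$ equivalences, and whose morphisms are monoidal transformations. $\Delta^+$: objects $[n]=\{0,\dots,n\}$, order-preserving maps. A special simplicial object in $\mathcal{M}$ is a functor $Y:(\Delta^+)^{\mathrm{op}}\to\mathcal{M}$ such that for each $n\ge0$ the map $(Y(\beta^n_0),\dots,Y(\beta^n_{n-1})):Y[n]\to Y[1]^n$ is an equivalence, where $\beta^n_j:[1]\to[n]$, $\beta^n_j(i)=i+j$ (equivalently, the maps $(Y(\alpha^1_{m,n}),Y(\alpha^2_{m,n})):Y[m+n]\to Y[m]\times Y[n]$ with $\alpha^1_{m,n}(i)=i$,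 $\alpha^2_{m,n}(i)=m+i$, and $Y[0]\to1$ are equivalences). $\mathbf{Special}((\Delta^+)^{\mathrm{op}},\mathcal{M})$ is the category of special simplicial objects and natural transformations. *)

theory Defs
  imports Main
begin

record ('o,'a) category =
  Ob :: "'o set"
  Ar :: "'a set"
  Dom :: "'a \<Rightarrow> 'o"
  Cod :: "'a \<Rightarrow> 'o"
  Idm :: "'o \<Rightarrow> 'a"
  Comp :: "'a \<Rightarrow> 'a \<Rightarrow> 'a"   (* Comp C g f = g o f *)

definition hom :: "('o,'a,'e) category_scheme \<Rightarrow> 'o \<Rightarrow> 'o \<Rightarrow> 'a set" where
  "hom C A B = {f \<in> Ar C. Dom C f = A \<and> Cod C f = B}"

definition is_category :: "('o,'a,'e) category_scheme \<Rightarrow> bool" where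
  "is_category C \<longleftrightarrow>
     (\<forall>f\<in>Ar C. Dom C f \<in> Ob C \<and> Cod C f \<in> Ob C) \<and>
     (\<forall>A\<in>Ob C. Idm C A \<in> hom C A A) \<and>
     (\<forall>f\<in>Ar C. \<forall>g\<in>Ar C. Cod C f = Dom C g \<longrightarrow> Comp C g f \<in> hom C (Dom C f) (Cod C g)) \<and>
     (\<forall>f\<in>Ar C. Comp C (Idm C (Cod C f)) f = f \<and> Comp C f (Idm C (Dom C f)) = f) \<and>
     (\<forall>f\<in>Ar C. \<forall>g\<in>Ar C. \<forall>h\<in>Ar C. Cod C f = Dom C g \<longrightarrow> Cod C g = Dom C h \<longrightarrow>
        Comp C h (Comp C g f) = Comp C (Comp C h g) f)"

definition is_iso :: "('o,'a,'e) category_scheme \<Rightarrow> 'a \<Rightarrow> bool" where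
  "is_iso C f \<longleftrightarrow> f \<in> Ar C \<and>
     (\<exists>g\<in>hom C (Cod C f) (Dom C f). Comp C g f = Idm C (Dom C f) \<and> Comp C f g = Idm C (Cod C f))"

definition is_functor ::
  "('o,'a,'e) category_scheme \<Rightarrow> ('p,'b,'d) category_scheme \<Rightarrow> ('o \<Rightarrow> 'p) \<Rightarrow> ('a \<Rightarrow> 'b) \<Rightarrow> bool" where
  "is_functor C D Fo Fa \<longleftrightarrow>
     (\<forall>A\<in>Ob C. Fo A \<in> Ob D) \<and>
     (\<forall>f\<in>Ar C. Fa f \<in> hom D (Fo (Dom C f)) (Fo (Cod C f))) \<and>
     (\<forall>A\<in>Ob C. Fa (Idm C A) = Idm D (Fo A)) \<and>
     (\<forall>f\<in>Ar C. \<forall>g\<in>Ar C. Cod C f = Dom C g \<longrightarrow> Fa (Comp C g f) = Comp D (Fa g) (Fa f))"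

definition iso_categories :: "('o,'a,'e) category_scheme \<Rightarrow> ('p,'b,'d) category_scheme \<Rightarrow> bool" where
  "iso_categories C D \<longleftrightarrow>
     (\<exists>Fo Fa Go Ga. is_functor C D Fo Fa \<and> is_functor D C Go Ga \<and>
        (\<forall>A\<in>Ob C. Go (Fo A) = A) \<and> (\<forall>B\<in>Ob D. Fo (Go B) = B) \<and>
        (\<forall>f\<in>Ar C. Ga (Fa f) = f) \<and> (\<forall>g\<in>Ar D. Fa (Ga g) = g))"

text \<open>Chosen finite products: a chosen terminal object and chosen binary products
  (with projections and pairing); the monoidal structure is given by them.\<close>
record ('o,'a) cmc = "('o,'a) category" +
  one :: 'o
  bang :: "'o \<Rightarrow> 'a"
  prd :: "'o \<Rightarrow> 'o \<Rightarrow> 'o"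
  pr1 :: "'o \<Rightarrow> 'o \<Rightarrow> 'a"
  pr2 :: "'o \<Rightarrow> 'o \<Rightarrow> 'a"
  pair :: "'a \<Rightarrow> 'a \<Rightarrow> 'a"
  Eqv :: "'a set"

definition tens :: "('o,'a) cmc \<Rightarrow> 'a \<Rightarrow> 'a \<Rightarrow> 'a" where
  "tens M f g = pair M (Comp M f (pr1 M (Dom M f) (Dom M g))) (Comp M g (pr2 M (Dom M f) (Dom M g)))"

definition assoc :: "('o,'a) cmc \<Rightarrow> 'o \<Rightarrow> 'o \<Rightarrow> 'o \<Rightarrow> 'a" where
  "assoc M A B C =
     pair M (Comp M (pr1 M A B) (pr1 M (prd M A B) C))
            (pair M (Comp M (pr2 M A B) (pr1 M (prd M A B) C)) (pr2 M (prd M A B) C))"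

definition is_cartesian :: "('o,'a) cmc \<Rightarrow> bool" where
  "is_cartesian M \<longleftrightarrow> is_category M \<and>
     one M \<in> Ob M \<and>
     (\<forall>A\<in>Ob M. bang M A \<in> hom M A (one M) \<and> (\<forall>f\<in>hom M A (one M). f = bang M A)) \<and>
     (\<forall>A\<in>Ob M. \<forall>B\<in>Ob M.
        prd M A B \<in> Ob M \<and> pr1 M A B \<in> hom M (prd M A B) A \<and> pr2 M A B \<in> hom M (prd M A B) B \<and>
        (\<forall>Z\<in>Ob M. \<forall>f\<in>hom M Z A. \<forall>g\<in>hom M Z B.
           pair M f g \<in> hom M Z (prd M A B) \<and>
           Comp M (pr1 M A B) (pair M f g) = f \<and> Comp M (pr2 M A B) (pair M f g) = g \<and>
           (\<forall>h\<in>hom M Z (prd M A B).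
              Comp M (pr1 M A B) h = f \<and> Comp M (pr2 M A B) h = g \<longrightarrow> h = pair M f g)))"

definition cartesian_with_equivalences :: "('o,'a) cmc \<Rightarrow> bool" where
  "cartesian_with_equivalences M \<longleftrightarrow> is_cartesian M \<and>
     Eqv M \<subseteq> Ar M \<and>
     (\<forall>f. is_iso M f \<longrightarrow> f \<in> Eqv M) \<and>
     (\<forall>f\<in>Ar M. \<forall>g\<in>Ar M. Cod M f = Dom M g \<longrightarrow>
        ((f \<in> Eqv M \<and> g \<in> Eqv M \<longrightarrow> Comp M g f \<in> Eqv M) \<and>
         (f \<in> Eqv M \<and> Comp M g f \<in> Eqv M \<longrightarrow> g \<in> Eqv M) \<and>
         (g \<in> Eqv M \<and> Comp M g f \<in> Eqv M \<longrightarrow> f \<in> Eqv M))) \<and>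
     (\<forall>f\<in>Eqv M. \<forall>g\<in>Eqv M. tens M f g \<in> Eqv M)"

text \<open>A morphism of \<Delta> from m = {0,...,m-1} to n is a triple (m, n, l) where the list l
  (of length m) lists the values of an order-preserving map, all < n.
  A morphism of \<Delta>+ from [m] = {0,...,m} to [n] is (m, n, l) with l of length m+1, values \<le> n.\<close>
type_synonym smor = "nat \<times> nat \<times> nat list"

definition delta_mor :: "smor \<Rightarrow> bool" where
  "delta_mor t = (case t of (m, n, l) \<Rightarrow> length l = m \<and> sorted l \<and> (\<forall>x\<in>set l. x < n))"

definition deltap_mor :: "smor \<Rightarrow> bool" where
  "deltap_mor t = (case t of (m, n, l) \<Rightarrow> length l = Suc m \<and> sorted l \<and> (\<forall>x\<in>set l. x \<le> n))"

definition delta_id :: "nat \<Rightarrow> smor" where "delta_id n = (n, n, [0..<n])"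
definition deltap_id :: "nat \<Rightarrow> smor" where "deltap_id n = (n, n, [0..<Suc n])"

definition scomp :: "smor \<Rightarrow> smor \<Rightarrow> smor" where
  "scomp g f = (case f of (m, _, lf) \<Rightarrow> case g of (_, p, lg) \<Rightarrow> (m, p, map (\<lambda>i. lg ! i) lf))"

definition dsum :: "smor \<Rightarrow> smor \<Rightarrow> smor" where
  "dsum f g = (case f of (m, n, lf) \<Rightarrow> case g of (m', n', lg) \<Rightarrow> (m + m', n + n', lf @ map (\<lambda>x. n + x) lg))"

definition beta :: "nat \<Rightarrow> nat \<Rightarrow> smor" where "beta n j = (1, n, [j, Suc j])"

record ('o,'a) colax =
  hob :: "nat \<Rightarrow> 'o"
  har :: "smor \<Rightarrow> 'a"
  xi :: "nat \<Rightarrow> nat \<Rightarrow> 'a"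
  xi0 :: 'a

definition is_htymon :: "('o,'a) cmc \<Rightarrow> ('o,'a) colax \<Rightarrow> bool" where
  "is_htymon M X \<longleftrightarrow>
     \<comment> \<open>functor \<Delta> \<rightarrow> M\<close>
     (\<forall>n. hob X n \<in> Ob M) \<and>
     (\<forall>m n l. delta_mor (m, n, l) \<longrightarrow> har X (m, n, l) \<in> hom M (hob X m) (hob X n)) \<and>
     (\<forall>t. \<not> delta_mor t \<longrightarrow> har X t = undefined) \<and>
     (\<forall>n. har X (delta_id n) = Idm M (hob X n)) \<and>
     (\<forall>f g. delta_mor f \<and> delta_mor g \<and> fst (snd f) = fst g \<longrightarrow>
        har X (scomp g f) = Comp M (har X g) (har X f)) \<and>
     \<comment> \<open>colax structure maps\<close>
     (\<forall>m n. xi X m n \<in> hom M (hob X (m + n)) (prd M (hob X m) (hob X n))) \<and>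
     xi0 X \<in> hom M (hob X 0) (one M) \<and>
     \<comment> \<open>naturality of \<xi>\<close>
     (\<forall>f g. delta_mor f \<and> delta_mor g \<longrightarrow>
        Comp M (tens M (har X f) (har X g)) (xi X (fst f) (fst g)) =
        Comp M (xi X (fst (snd f)) (fst (snd g))) (har X (dsum f g))) \<and>
     \<comment> \<open>coassociativity\<close>
     (\<forall>l m n.
        Comp M (assoc M (hob X l) (hob X m) (hob X n))
          (Comp M (tens M (xi X l m) (Idm M (hob X n))) (xi X (l + m) n)) =
        Comp M (tens M (Idm M (hob X l)) (xi X m n)) (xi X l (m + n))) \<and>
     \<comment> \<open>counit\<close>
     (\<forall>n. Comp M (pr2 M (one M) (hob X n))
            (Comp M (tens M (xi0 X) (Idm M (hob X n))) (xi X 0 n)) = Idm M (hob X n)) \<and>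
     (\<forall>n. Comp M (pr1 M (hob X n) (one M))
            (Comp M (tens M (Idm M (hob X n)) (xi0 X)) (xi X n 0)) = Idm M (hob X n)) \<and>
     \<comment> \<open>homotopy condition\<close>
     xi0 X \<in> Eqv M \<and> (\<forall>m n. xi X m n \<in> Eqv M)"

definition is_montrans :: "('o,'a) cmc \<Rightarrow> ('o,'a) colax \<Rightarrow> ('o,'a) colax \<Rightarrow> (nat \<Rightarrow> 'a) \<Rightarrow> bool" where
  "is_montrans M X Y \<theta> \<longleftrightarrow>
     (\<forall>n. \<theta> n \<in> hom M (hob X n) (hob Y n)) \<and>
     (\<forall>m n l. delta_mor (m, n, l) \<longrightarrow>
        Comp M (\<theta> n) (har X (m, n, l)) = Comp M (har Y (m, n, l)) (\<theta> m)) \<and>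
     (\<forall>m n. Comp M (xi Y m n) (\<theta> (m + n)) = Comp M (tens M (\<theta> m) (\<theta> n)) (xi X m n)) \<and>
     Comp M (xi0 Y) (\<theta> 0) = xi0 X"

definition HtyAlg_Mon ::
  "('o,'a) cmc \<Rightarrow> (('o,'a) colax, ('o,'a) colax \<times> ('o,'a) colax \<times> (nat \<Rightarrow> 'a)) category" where
  "HtyAlg_Mon M = \<lparr> Ob = {X. is_htymon M X},
     Ar = {(X, Y, \<theta>). is_htymon M X \<and> is_htymon M Y \<and> is_montrans M X Y \<theta>},
     Dom = (\<lambda>(X, Y, \<theta>). X), Cod = (\<lambda>(X, Y, \<theta>). Y),
     Idm = (\<lambda>X. (X, X, \<lambda>n. Idm M (hob X n))),
     Comp = (\<lambda>(Y', Z, \<psi>) (X, Y, \<theta>). (X, Z, \<lambda>n. Comp M (\<psi> n) (\<theta> n))) \<rparr>"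

record ('o,'a) simpobj =
  sob :: "nat \<Rightarrow> 'o"
  sar :: "smor \<Rightarrow> 'a"

fun pw :: "('o,'a) cmc \<Rightarrow> 'o \<Rightarrow> nat \<Rightarrow> 'o" where
  "pw M A 0 = one M"
| "pw M A (Suc k) = prd M (pw M A k) A"

fun tupl :: "('o,'a) cmc \<Rightarrow> 'o \<Rightarrow> (nat \<Rightarrow> 'a) \<Rightarrow> nat \<Rightarrow> 'a" where
  "tupl M Z g 0 = bang M Z"
| "tupl M Z g (Suc k) = pair M (tupl M Z g k) (g k)"

definition is_special :: "('o,'a) cmc \<Rightarrow> ('o,'a) simpobj \<Rightarrow> bool" where
  "is_special M Y \<longleftrightarrow>
     \<comment> \<open>functor (\<Delta>+)^op \<rightarrow> M\<close>
     (\<forall>n. sob Y n \<in> Ob M) \<and>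
     (\<forall>m n l. deltap_mor (m, n, l) \<longrightarrow> sar Y (m, n, l) \<in> hom M (sob Y n) (sob Y m)) \<and>
     (\<forall>t. \<not> deltap_mor t \<longrightarrow> sar Y t = undefined) \<and>
     (\<forall>n. sar Y (deltap_id n) = Idm M (sob Y n)) \<and>
     (\<forall>f g. deltap_mor f \<and> deltap_mor g \<and> fst (snd f) = fst g \<longrightarrow>
        sar Y (scomp g f) = Comp M (sar Y f) (sar Y g)) \<and>
     \<comment> \<open>Segal-type condition\<close>
     (\<forall>n. tupl M (sob Y n) (\<lambda>j. sar Y (beta n j)) n \<in> Eqv M)"

definition is_nattrans_sp :: "('o,'a) cmc \<Rightarrow> ('o,'a) simpobj \<Rightarrow> ('o,'a) simpobj \<Rightarrow> (nat \<Rightarrow> 'a) \<Rightarrow> bool" where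
  "is_nattrans_sp M Y Y' \<theta> \<longleftrightarrow>
     (\<forall>n. \<theta> n \<in> hom M (sob Y n) (sob Y' n)) \<and>
     (\<forall>m n l. deltap_mor (m, n, l) \<longrightarrow>
        Comp M (\<theta> m) (sar Y (m, n, l)) = Comp M (sar Y' (m, n, l)) (\<theta> n))"

definition Special ::
  "('o,'a) cmc \<Rightarrow> (('o,'a) simpobj, ('o,'a) simpobj \<times> ('o,'a) simpobj \<times> (nat \<Rightarrow> 'a)) category" where
  "Special M = \<lparr> Ob = {Y. is_special M Y},
     Ar = {(Y, Y', \<theta>). is_special M Y \<and> is_special M Y' \<and> is_nattrans_sp M Y Y' \<theta>},
     Dom = (\<lambda>(Y, Y', \<theta>). Y), Cod = (\<lambda>(Y, Y', \<theta>). Y'),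
     Idm = (\<lambda>Y. (Y, Y, \<lambda>n. Idm M (sob Y n))),
     Comp = (\<lambda>(Y', Z, \<psi>) (Y, Y'', \<theta>). (Y, Z, \<lambda>n. Comp M (\<psi> n) (\<theta> n))) \<rparr>"

end

theory Submission
  imports Defs
begin


definition cnt :: "nat list \<Rightarrow> nat \<Rightarrow> nat" where
  "cnt l x = length (filter (\<lambda>y. y < x) l)"

lemma cnt_card: "cnt l x = card {i. i < length l \<and> l ! i < x}"
  unfolding cnt_def by (simp add: length_filter_conv_card)

lemma cnt_K: "sorted l \<Longrightarrow> i < length l \<Longrightarrow> (cnt l x \<le> i) = (x \<le> l ! i)"
proof (induction l arbitrary: i)
  case Nil then show ?case by simp
next
  case (Cons a l)
  have z: "x \<le> a \<Longrightarrow> cnt l x = 0" using Cons.prems(1) unfolding cnt_def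
    by (auto simp: filter_empty_conv)
  show ?case
  proof (cases i)
    case 0 then show ?thesis using z by (auto simp: cnt_def)
  next
    case (Suc j)
    have "a \<le> l ! j" using Cons.prems Suc by (auto simp: sorted_iff_nth_mono_less)
    then show ?thesis using Cons Suc z by (auto simp: cnt_def)
  qed
qed

lemma cnt_K2: "sorted l \<Longrightarrow> i < length l \<Longrightarrow> (i < cnt l x) = (l ! i < x)"
  using cnt_K[of l i x] by linarith

lemma cnt_le: "cnt l x \<le> length l"
  unfolding cnt_def by simp

lemma cnt_all: "(\<forall>y\<in>set l. y < x) \<Longrightarrow> cnt l x = length l"
  unfolding cnt_def by simp

lemma cnt_zero: "cnt l 0 = 0" unfolding cnt_def by simp

lemma cnt_append: "cnt (a @ b) x = cnt a x + cnt b x" unfolding cnt_def by simp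

lemma cnt_mono: "x \<le> y \<Longrightarrow> cnt l x \<le> cnt l y"
  unfolding cnt_def by (induction l) auto

lemma card_lt: "card {j. j < (N::nat) \<and> j < a} = min N a"
proof -
  have "{j. j < N \<and> j < a} = {..<min N a}" by auto
  then show ?thesis by simp
qed

lemma cnt_map_upt: "cnt (map f [0..<N]) x = card {j. j < N \<and> f j < x}"
  unfolding cnt_card by (rule arg_cong[where f=card]) auto

definition dstar :: "smor \<Rightarrow> smor" where
  "dstar t = (case t of (m, n, l) \<Rightarrow> (n, m, map (cnt l) [0..<Suc n]))"
definition Gm :: "smor \<Rightarrow> smor" where
  "Gm t = (case t of (m, n, l) \<Rightarrow> (n, Suc (Suc m), map (\<lambda>i. cnt l (Suc i)) [0..<n]))"
definition al1 :: "nat \<Rightarrow> nat \<Rightarrow> smor" where "al1 m n = (m, m + n, [0..<Suc m])"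
definition al2 :: "nat \<Rightarrow> nat \<Rightarrow> smor" where "al2 m n = (n, m + n, map (\<lambda>i. m + i) [0..<Suc n])"
definition ee :: smor where "ee = (0, 1, [])"
definition cc :: "nat \<Rightarrow> smor" where "cc k = (k, 1, replicate k 0)"

lemma sorted_map_mono: "(\<And>x y. x \<le> y \<Longrightarrow> f x \<le> f y) \<Longrightarrow> sorted (map f [a..<b])"
  by (simp add: sorted_iff_nth_mono del: upt.simps(2))

lemma dm_dstar: "delta_mor (m, n, l) \<Longrightarrow> deltap_mor (dstar (m, n, l))"
  unfolding delta_mor_def deltap_mor_def dstar_def prod.case
proof (intro conjI)
  show "sorted (map (cnt l) [0..<Suc n])" by (rule sorted_map_mono) (rule cnt_mono)
qed (use cnt_le[of l] in auto)

lemma dm_Gm: "deltap_mor (m, n, l) \<Longrightarrow> delta_mor (Gm (m, n, l))"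
  unfolding delta_mor_def deltap_mor_def Gm_def prod.case
proof (intro conjI)
  show "sorted (map (\<lambda>i. cnt l (Suc i)) [0..<n])" by (rule sorted_map_mono) (simp add: cnt_mono)
qed (use cnt_le[of l] in \<open>auto simp: less_Suc_eq_le\<close>)

lemma dm_al1: "deltap_mor (al1 m n)" unfolding deltap_mor_def al1_def prod.case
  by (auto simp del: upt_Suc)
lemma dm_al2: "deltap_mor (al2 m n)" unfolding deltap_mor_def al2_def prod.case
proof (intro conjI)
  show "sorted (map ((+) m) [0..<Suc n])" by (rule sorted_map_mono) simp
qed (auto simp del: upt_Suc)
lemma dm_ee: "delta_mor ee" unfolding delta_mor_def ee_def by auto
lemma dm_cc: "delta_mor (cc k)" unfolding delta_mor_def cc_def by auto
lemma dm_id: "delta_mor (delta_id n)" unfolding delta_mor_def delta_id_def by auto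
lemma dmp_id: "deltap_mor (deltap_id n)" unfolding deltap_mor_def deltap_id_def by (auto simp del: upt_Suc)
lemma dmp_beta: "j < n \<Longrightarrow> deltap_mor (beta n j)" unfolding deltap_mor_def beta_def by auto

lemma dm_dsum: "delta_mor (m, n, lf) \<Longrightarrow> delta_mor (m', n', lg) \<Longrightarrow> delta_mor (dsum (m, n, lf) (m', n', lg))"
  unfolding delta_mor_def dsum_def
  by (auto simp: sorted_append sorted_map intro: sorted_wrt_mono_rel[rotated])

lemma dm_scomp: "delta_mor (m, n, lf) \<Longrightarrow> delta_mor (n, p, lg) \<Longrightarrow> delta_mor (scomp (n, p, lg) (m, n, lf))"
  unfolding delta_mor_def scomp_def
  by (auto simp: sorted_iff_nth_mono)

lemma dmp_scomp: "deltap_mor (m, n, lf) \<Longrightarrow> deltap_mor (n, p, lg) \<Longrightarrow> deltap_mor (scomp (n, p, lg) (m, n, lf))"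
  unfolding deltap_mor_def scomp_def
  by (auto simp: sorted_iff_nth_mono less_Suc_eq_le)

lemma cnt_comp: "sorted lg \<Longrightarrow> \<forall>x\<in>set lf. x < length lg \<Longrightarrow> cnt (map (nth lg) lf) k = cnt lf (cnt lg k)"
  unfolding cnt_card[of "map (nth lg) lf"] cnt_card[of lf]
  by (rule arg_cong[where f=card]) (auto simp: cnt_K2)

lemma cnt_upt_min: "cnt [0..<n] j = min n j"
proof -
  have "{i. i < n \<and> [0..<n] ! i < j} = {..<min n j}" by auto
  then show ?thesis unfolding cnt_card by simp
qed

lemma cnt_upt: "j \<le> n \<Longrightarrow> cnt [0..<n] j = j"
  by (simp add: cnt_upt_min)

lemma cnt_all': "\<forall>y\<in>set l. y < c \<Longrightarrow> c \<le> x \<Longrightarrow> cnt l x = length l"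
  by (rule cnt_all) auto

lemma cnt_shift: "cnt (map (\<lambda>y. c + y) l) (c + i) = cnt l i"
  unfolding cnt_def by (simp add: comp_def)

lemma cnt_shift0: "i \<le> c \<Longrightarrow> cnt (map (\<lambda>y. c + y) l) i = 0"
  unfolding cnt_def by (auto simp: filter_empty_conv)

lemma dstar_scomp: "delta_mor (m, n, lf) \<Longrightarrow> delta_mor (n, p, lg) \<Longrightarrow>
  dstar (scomp (n, p, lg) (m, n, lf)) = scomp (dstar (m, n, lf)) (dstar (n, p, lg))"
  unfolding dstar_def scomp_def delta_mor_def
  using cnt_le[of lg]
  by (auto simp: cnt_comp less_Suc_eq_le simp del: upt_Suc intro!: map_cong)

lemma dstar_id: "dstar (delta_id n) = deltap_id n"
  unfolding dstar_def delta_id_def deltap_id_def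
  by (auto simp: cnt_upt less_Suc_eq_le simp del: upt_Suc intro!: nth_equalityI)

lemma nat1: "delta_mor (m, m', lf) \<Longrightarrow> delta_mor (n, n', lg) \<Longrightarrow>
  scomp (al1 m n) (dstar (m, m', lf)) = scomp (dstar (dsum (m, m', lf) (n, n', lg))) (al1 m' n')"
  unfolding dstar_def scomp_def delta_mor_def al1_def dsum_def
  using cnt_le[of lf]
  by (auto simp: cnt_append cnt_shift0 less_Suc_eq_le nth_append simp del: upt_Suc intro!: nth_equalityI)

lemma nat2: "delta_mor (m, m', lf) \<Longrightarrow> delta_mor (n, n', lg) \<Longrightarrow>
  scomp (al2 m n) (dstar (n, n', lg)) = scomp (dstar (dsum (m, m', lf) (n, n', lg))) (al2 m' n')"
  unfolding dstar_def scomp_def delta_mor_def al2_def dsum_def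
  using cnt_le[of lg]
  by (auto simp: cnt_append cnt_shift cnt_all'[where c=m'] less_Suc_eq_le nth_append simp del: upt_Suc intro!: nth_equalityI)

lemma C1: "scomp (al1 (l + m) n) (al1 l m) = al1 l (m + n)"
  unfolding scomp_def al1_def
  by (auto simp: less_Suc_eq_le nth_append simp del: upt_Suc intro!: nth_equalityI)

lemma C2: "scomp (al1 (l + m) n) (al2 l m) = scomp (al2 l (m + n)) (al1 m n)"
  unfolding scomp_def al1_def al2_def
  by (auto simp: less_Suc_eq_le nth_append simp del: upt_Suc intro!: nth_equalityI)

lemma C3: "scomp (al2 l (m + n)) (al2 m n) = al2 (l + m) n"
  unfolding scomp_def al2_def
  by (auto simp: less_Suc_eq_le nth_append simp del: upt_Suc intro!: nth_equalityI)

lemma al2_0: "al2 0 n = deltap_id n"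
  unfolding al2_def deltap_id_def by (simp add: map_idI)

lemma al1_0: "al1 m 0 = deltap_id m"
  unfolding al1_def deltap_id_def by simp

lemma Gm_dstar: "delta_mor (m, n, lf) \<Longrightarrow> Gm (dstar (m, n, lf)) = dsum ee (dsum (m, n, lf) ee)"
proof -
  assume d: "delta_mor (m, n, lf)"
  have "cnt (map (cnt lf) [0..<Suc n]) (Suc i) = Suc (lf ! i)" if "i < m" for i
  proof -
    have s: "sorted lf" "length lf = m" "\<forall>x\<in>set lf. x < n" using d by (auto simp: delta_mor_def)
    have "cnt (map (cnt lf) [0..<Suc n]) (Suc i) = card {j. j < Suc n \<and> cnt lf j < Suc i}"
      by (rule cnt_map_upt)
    also have "\<dots> = card {j. j < Suc n \<and> j < Suc (lf ! i)}"
      using cnt_K[OF s(1), of i] that s(2) by (intro arg_cong[where f=card]) (auto simp: less_Suc_eq_le)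
    also have "\<dots> = Suc (lf ! i)" using s that by (simp add: card_lt)
    finally show ?thesis .
  qed
  then show ?thesis using d unfolding Gm_def dstar_def dsum_def ee_def delta_mor_def
    by (auto simp del: upt_Suc intro!: nth_equalityI)
qed

lemma Gm_al1: "Gm (al1 m n) = dsum ee (dsum (delta_id m) (cc n))"
  unfolding Gm_def al1_def dsum_def ee_def delta_id_def cc_def
  by (auto simp: cnt_upt_min nth_append simp del: upt_Suc intro!: nth_equalityI)

lemma Gm_al2: "Gm (al2 m n) = dsum (cc m) (dsum (delta_id n) ee)"
proof -
  have "cnt (map ((+) m) [0..<Suc n]) (Suc i) = (if i < m then 0 else Suc (i - m))" if "i < m + n" for i
  proof (cases "i < m")
    case True then show ?thesis by (simp add: cnt_shift0 del: upt_Suc)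
  next
    case False
    then obtain k where k: "i = m + k" by (metis le_add_diff_inverse not_less)
    have "cnt (map ((+) m) [0..<Suc n]) (m + Suc k) = Suc k"
      using k that by (simp only: cnt_shift cnt_upt_min)
    then show ?thesis using k by simp
  qed
  then show ?thesis
    unfolding Gm_def al2_def dsum_def ee_def delta_id_def cc_def
    by (auto simp: nth_append simp del: upt_Suc intro!: nth_equalityI)
qed

lemma beta1: "j < k \<Longrightarrow> scomp (al1 k 1) (beta k j) = beta (Suc k) j"
  unfolding scomp_def al1_def beta_def by (simp del: upt_Suc add: nth_upt)

lemma beta2: "al2 k 1 = beta (Suc k) k"
  unfolding al2_def beta_def by simp



lemma CL_nth: assumes a: "y < m + 4" shows "([0, 0] @ map (\<lambda>x. 1 + x) ([0..<m] @ [m, m])) ! y = (if y < 2 then 0 else if y < m+2 then y - 1 else (m+1::nat))"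
proof (cases y)
  case 0 then show ?thesis by simp
next
  case (Suc y1)
  show ?thesis
  proof (cases y1)
    case 0 then show ?thesis using Suc by simp
  next
    case (Suc z)
    have y: "y = Suc (Suc z)" using Suc \<open>y = Suc y1\<close> by simp
    consider "z < m" | "z = m" | "z = m + 1" using a y by linarith
    then show ?thesis
      by cases (use y in \<open>auto simp: nth_append\<close>)
  qed
qed

lemma DL_nth: assumes a: "x \<le> n + 1" shows "(0 # map (\<lambda>x. 1 + x) (map f [0..<n] @ [c])) ! x = (if x = 0 then 0 else if x \<le> n then 1 + f (x - 1) else (1 + c::nat))"
proof (cases x)
  case 0 then show ?thesis by simp
next
  case (Suc z)
  consider "z < n" | "z = n" using a Suc by linarith
  then show ?thesis
    by cases (use Suc in \<open>auto simp: nth_append\<close>)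
qed

lemma Gm_round: "deltap_mor (m, n, l) \<Longrightarrow>
  scomp (dstar (Gm (m, n, l))) (scomp (al2 1 (m + 1)) (al1 m 1)) = (m, n, l)"
proof -
  assume d: "deltap_mor (m, n, l)"
  have s: "sorted l" "length l = Suc m" "\<forall>x\<in>set l. x \<le> n" using d by (auto simp: deltap_mor_def)
  have key: "cnt (map (\<lambda>i. cnt l (Suc i)) [0..<n]) (Suc j) = l ! j" if "j \<le> m" for j
  proof -
    have "cnt (map (\<lambda>i. cnt l (Suc i)) [0..<n]) (Suc j) = card {i. i < n \<and> cnt l (Suc i) < Suc j}"
      by (rule cnt_map_upt)
    also have "\<dots> = card {i. i < n \<and> i < l ! j}"
    proof -
      have e: "(cnt l (Suc i) < Suc j) = (i < l ! j)" for i
      proof -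
        have "(cnt l (Suc i) \<le> j) = (Suc i \<le> l ! j)" by (rule cnt_K[OF s(1)]) (use that s(2) in simp)
        then show ?thesis by linarith
      qed
      show ?thesis by (simp only: e)
    qed
    also have "\<dots> = l ! j" using s that by (simp add: card_lt)
    finally show ?thesis .
  qed
  define LG where "LG = map (\<lambda>i. cnt l (Suc i)) [0..<n]"
  have I: "scomp (al2 1 (m + 1)) (al1 m 1) = (m, 1 + (m + 1), map (\<lambda>i. map ((+) 1) [0..<Suc (m + 1)] ! i) [0..<Suc m])"
    unfolding scomp_def al1_def al2_def by (simp only: prod.case)
  have D: "dstar (Gm (m, n, l)) = (Suc (Suc m), n, map (cnt LG) [0..<Suc (Suc (Suc m))])"
    unfolding dstar_def Gm_def LG_def by (simp only: prod.case)
  have L: "map (\<lambda>i. map (cnt LG) [0..<Suc (Suc (Suc m))] ! i) (map (\<lambda>i. map ((+) 1) [0..<Suc (m + 1)] ! i) [0..<Suc m]) = l"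
  proof (rule nth_equalityI)
    show "length (map (\<lambda>i. map (cnt LG) [0..<Suc (Suc (Suc m))] ! i) (map (\<lambda>i. map ((+) 1) [0..<Suc (m + 1)] ! i) [0..<Suc m])) = length l"
      using s by simp
    fix j assume "j < length (map (\<lambda>i. map (cnt LG) [0..<Suc (Suc (Suc m))] ! i) (map (\<lambda>i. map ((+) 1) [0..<Suc (m + 1)] ! i) [0..<Suc m]))"
    then have j: "j \<le> m" by simp
    have "l ! j \<le> n" using s j by (simp add: less_Suc_eq_le)
    then show "map (\<lambda>i. map (cnt LG) [0..<Suc (Suc (Suc m))] ! i) (map (\<lambda>i. map ((+) 1) [0..<Suc (m + 1)] ! i) [0..<Suc m]) ! j = l ! j"
      using j key[OF j] unfolding LG_def
      by (simp del: upt_Suc add: nth_upt less_Suc_eq_le)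
  qed
  show ?thesis unfolding D I unfolding scomp_def prod.case L ..
qed



lemma Gm_comp: "deltap_mor (m, n, lf) \<Longrightarrow> deltap_mor (n, p, lg) \<Longrightarrow>
  Gm (scomp (n, p, lg) (m, n, lf)) =
  scomp (dsum (cc 2) (dsum (delta_id m) (cc 2)))
    (scomp (dsum (delta_id 1) (dsum (Gm (m, n, lf)) (delta_id 1))) (Gm (n, p, lg)))"
proof -
  assume df: "deltap_mor (m, n, lf)" and dg: "deltap_mor (n, p, lg)"
  have sf: "sorted lf" "length lf = Suc m" "\<forall>x\<in>set lf. x \<le> n" using df by (auto simp: deltap_mor_def)
  have sg: "sorted lg" "length lg = Suc n" "\<forall>x\<in>set lg. x \<le> p" using dg by (auto simp: deltap_mor_def)
  define DL where "DL = [0..<1] @ map (\<lambda>x. 1 + x) (map (\<lambda>i. cnt lf (Suc i)) [0..<n] @ map (\<lambda>x. Suc (Suc m) + x) [0..<1])"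
  define CL where "CL = replicate 2 0 @ map (\<lambda>x. 1 + x) ([0..<m] @ map (\<lambda>x. m + x) (replicate 2 (0::nat)))"
  have CLe: "CL = [0, 0] @ map (\<lambda>x. 1 + x) ([0..<m] @ [m, m])" unfolding CL_def by (simp add: numeral_2_eq_2)
  have DLe: "DL = 0 # map (\<lambda>x. 1 + x) (map (\<lambda>i. cnt lf (Suc i)) [0..<n] @ [Suc (Suc m)])" unfolding DL_def by simp
  have CLn: "CL ! y = (if y < 2 then 0 else if y < m + 2 then y - 1 else m + 1)" if "y < m + 4" for y
    unfolding CLe by (rule CL_nth[OF that])
  have DLn: "DL ! x = (if x = 0 then 0 else if x \<le> n then 1 + cnt lf x else m + 3)" if "x \<le> n + 1" for x
  proof -
    have "DL ! x = (if x = 0 then 0 else if x \<le> n then 1 + cnt lf (Suc (x - 1)) else 1 + Suc (Suc m))"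
      unfolding DLe by (rule DL_nth[OF that])
    then show ?thesis by (cases x) auto
  qed
  have key: "CL ! (DL ! x) = cnt lf x" if "x \<le> n + 1" for x
  proof -
    have c: "cnt lf x \<le> Suc m" using cnt_le[of lf x] sf by simp
    have "x = 0 \<or> (x \<noteq> 0 \<and> x \<le> n) \<or> x = n + 1" using that by linarith
    then show ?thesis
    proof (elim disjE conjE)
      assume "x = 0"
      moreover have "DL ! 0 = 0" using DLn[of 0] by simp
      moreover have "CL ! 0 = 0" using CLn[of 0] by simp
      ultimately show ?thesis by (simp add: cnt_zero)
    next
      assume 2: "x \<noteq> 0" "x \<le> n"
      have d: "DL ! x = 1 + cnt lf x" using DLn[OF that] 2 by simp
      have "CL ! (1 + cnt lf x) = (if 1 + cnt lf x < 2 then 0 else if 1 + cnt lf x < m + 2 then cnt lf x else m + 1)"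
        using CLn[of "1 + cnt lf x"] c by simp
      then show ?thesis using d c by (simp split: if_splits)
    next
      assume 3: "x = n + 1"
      have "cnt lf x = Suc m" using sf 3 by (simp add: cnt_all' [where c="Suc n"] less_Suc_eq_le)
      moreover have "DL ! x = m + 3" using DLn[OF that] 3 by simp
      moreover have "CL ! (m + 3) = m + 1" using CLn[of "m+3"] by simp
      ultimately show ?thesis by simp
    qed
  qed
  have key2: "cnt (map (nth lg) lf) (Suc i) = CL ! (DL ! cnt lg (Suc i))" for i
  proof -
    have "cnt lg (Suc i) \<le> n + 1" using cnt_le[of lg] sg by simp
    then show ?thesis using key cnt_comp[OF sg(1), of lf] sf sg by (simp add: less_Suc_eq_le)
  qed
  have R: "scomp (dsum (cc 2) (dsum (delta_id m) (cc 2)))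
    (scomp (dsum (delta_id 1) (dsum (Gm (m, n, lf)) (delta_id 1))) (Gm (n, p, lg)))
    = (p, 1 + (m + 1), map (nth CL) (map (nth DL) (map (\<lambda>i. cnt lg (Suc i)) [0..<p])))"
    unfolding CL_def DL_def
    by (simp only: Gm_def scomp_def dsum_def cc_def delta_id_def prod.case append_Nil)
  have L: "Gm (scomp (n, p, lg) (m, n, lf)) = (p, Suc (Suc m), map (\<lambda>i. cnt (map (nth lg) lf) (Suc i)) [0..<p])"
    by (simp add: Gm_def scomp_def)
  have M: "map (\<lambda>i. cnt (map (nth lg) lf) (Suc i)) [0..<p] = map (nth CL) (map (nth DL) (map (\<lambda>i. cnt lg (Suc i)) [0..<p]))"
    by (simp only: map_map comp_def key2)
  have E: "1 + (m + 1) = Suc (Suc m)" by simp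
  have G1: "Gm (scomp (n, p, lg) (m, n, lf)) = (p, Suc (Suc m), map (nth CL) (map (nth DL) (map (\<lambda>i. cnt lg (Suc i)) [0..<p])))"
    using L M by (rule trans[OF _ arg_cong[where f="\<lambda>x. (p, Suc (Suc m), x)"]])
  note R2 = R[unfolded E]
  have G2: "?thesis = (Gm (scomp (n, p, lg) (m, n, lf)) = (p, Suc (Suc m), map (nth CL) (map (nth DL) (map (\<lambda>i. cnt lg (Suc i)) [0..<p]))))"
    by (simp only: R2)
  show ?thesis by (rule G2[THEN iffD2, OF G1])
qed




lemma dsum_fst[simp]: "fst (dsum f g) = fst f + fst g" unfolding dsum_def by (auto split: prod.splits)
lemma dsum_fst2[simp]: "fst (snd (dsum f g)) = fst (snd f) + fst (snd g)" unfolding dsum_def by (auto split: prod.splits)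
lemma scomp_fst[simp]: "fst (scomp g f) = fst f" unfolding scomp_def by (auto split: prod.splits)
lemma scomp_fst2[simp]: "fst (snd (scomp g f)) = fst (snd g)" unfolding scomp_def by (auto split: prod.splits)
lemma Gm_fst[simp]: "fst (Gm h) = fst (snd h)" unfolding Gm_def by (auto split: prod.splits)
lemma Gm_fst2[simp]: "fst (snd (Gm h)) = Suc (Suc (fst h))" unfolding Gm_def by (auto split: prod.splits)
lemma dstar_fst[simp]: "fst (dstar h) = fst (snd h)" unfolding dstar_def by (auto split: prod.splits)
lemma dstar_fst2[simp]: "fst (snd (dstar h)) = fst h" unfolding dstar_def by (auto split: prod.splits)
lemma al1_fst[simp]: "fst (al1 m n) = m" "fst (snd (al1 m n)) = m + n" unfolding al1_def by auto
lemma al2_fst[simp]: "fst (al2 m n) = n" "fst (snd (al2 m n)) = m + n" unfolding al2_def by auto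
lemma ee_fst[simp]: "fst ee = 0" "fst (snd ee) = 1" unfolding ee_def by auto
lemma cc_fst[simp]: "fst (cc k) = k" "fst (snd (cc k)) = 1" unfolding cc_def by auto
lemma did_fst[simp]: "fst (delta_id k) = k" "fst (snd (delta_id k)) = k" unfolding delta_id_def by auto
lemma dpid_fst[simp]: "fst (deltap_id k) = k" "fst (snd (deltap_id k)) = k" unfolding deltap_id_def by auto
lemma beta_fst[simp]: "fst (beta n j) = 1" "fst (snd (beta n j)) = n" unfolding beta_def by auto

lemma dm_dsum'[simp]: "delta_mor f \<Longrightarrow> delta_mor g \<Longrightarrow> delta_mor (dsum f g)"
  by (cases f; cases g) (auto intro: dm_dsum)
lemma dm_scomp'[simp]: "delta_mor f \<Longrightarrow> delta_mor g \<Longrightarrow> fst (snd f) = fst g \<Longrightarrow> delta_mor (scomp g f)"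
  by (cases f; cases g) (auto intro: dm_scomp)
lemma dmp_scomp'[simp]: "deltap_mor f \<Longrightarrow> deltap_mor g \<Longrightarrow> fst (snd f) = fst g \<Longrightarrow> deltap_mor (scomp g f)"
  by (cases f; cases g) (auto intro: dmp_scomp)
lemma dm_Gm'[simp]: "deltap_mor h \<Longrightarrow> delta_mor (Gm h)"
  by (cases h) (auto intro: dm_Gm)
lemma dm_dstar'[simp]: "delta_mor h \<Longrightarrow> deltap_mor (dstar h)"
  by (cases h) (auto intro: dm_dstar)
declare dm_al1[simp] dm_al2[simp] dm_ee[simp] dm_cc[simp] dm_id[simp] dmp_id[simp]

locale cwe =
  fixes M :: "('o,'a) cmc"
  assumes cwe: "cartesian_with_equivalences M"
begin

abbreviation cmp (infixr "\<cdot>" 70) where "g \<cdot> f \<equiv> Comp M g f"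

lemma cart: "is_cartesian M" using cwe unfolding cartesian_with_equivalences_def by auto
lemma cat: "is_category M" using cart unfolding is_cartesian_def by auto

lemma hom_iff: "f \<in> hom M A B \<longleftrightarrow> f \<in> Ar M \<and> Dom M f = A \<and> Cod M f = B"
  unfolding hom_def by auto

lemma Dom_Ob[simp]: "f \<in> Ar M \<Longrightarrow> Dom M f \<in> Ob M" using cat unfolding is_category_def by auto
lemma Cod_Ob[simp]: "f \<in> Ar M \<Longrightarrow> Cod M f \<in> Ob M" using cat unfolding is_category_def by auto

lemma comp_Ar[simp]: "f \<in> Ar M \<Longrightarrow> g \<in> Ar M \<Longrightarrow> Cod M f = Dom M g \<Longrightarrow> g \<cdot> f \<in> Ar M"
  using cat unfolding is_category_def hom_def by auto
lemma comp_Dom[simp]: "f \<in> Ar M \<Longrightarrow> g \<in> Ar M \<Longrightarrow> Cod M f = Dom M g \<Longrightarrow> Dom M (g \<cdot> f) = Dom M f"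
  using cat unfolding is_category_def hom_def by auto
lemma comp_Cod[simp]: "f \<in> Ar M \<Longrightarrow> g \<in> Ar M \<Longrightarrow> Cod M f = Dom M g \<Longrightarrow> Cod M (g \<cdot> f) = Cod M g"
  using cat unfolding is_category_def hom_def by auto
lemma comp_assoc[simp]: "f \<in> Ar M \<Longrightarrow> g \<in> Ar M \<Longrightarrow> h \<in> Ar M \<Longrightarrow> Cod M f = Dom M g \<Longrightarrow> Cod M g = Dom M h \<Longrightarrow>
  (h \<cdot> g) \<cdot> f = h \<cdot> (g \<cdot> f)"
  using cat unfolding is_category_def by metis

lemma ctx: "a \<cdot> b = c \<Longrightarrow> r \<in> Ar M \<Longrightarrow> b \<in> Ar M \<Longrightarrow> a \<in> Ar M \<Longrightarrow> Cod M r = Dom M b \<Longrightarrow> Cod M b = Dom M a \<Longrightarrow>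
  a \<cdot> (b \<cdot> r) = c \<cdot> r"
  by (metis comp_assoc)

lemma Id_Ar[simp]: "A \<in> Ob M \<Longrightarrow> Idm M A \<in> Ar M" using cat unfolding is_category_def hom_def by auto
lemma Id_Dom[simp]: "A \<in> Ob M \<Longrightarrow> Dom M (Idm M A) = A" using cat unfolding is_category_def hom_def by auto
lemma Id_Cod[simp]: "A \<in> Ob M \<Longrightarrow> Cod M (Idm M A) = A" using cat unfolding is_category_def hom_def by auto
lemma Id_left[simp]: "f \<in> Ar M \<Longrightarrow> Cod M f = A \<Longrightarrow> Idm M A \<cdot> f = f" using cat unfolding is_category_def by auto
lemma Id_right[simp]: "f \<in> Ar M \<Longrightarrow> Dom M f = A \<Longrightarrow> f \<cdot> Idm M A = f" using cat unfolding is_category_def by auto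

lemma one_Ob[simp]: "one M \<in> Ob M" using cart unfolding is_cartesian_def by auto
lemma bang_Ar[simp]: "A \<in> Ob M \<Longrightarrow> bang M A \<in> Ar M" using cart unfolding is_cartesian_def hom_def by auto
lemma bang_Dom[simp]: "A \<in> Ob M \<Longrightarrow> Dom M (bang M A) = A" using cart unfolding is_cartesian_def hom_def by auto
lemma bang_Cod[simp]: "A \<in> Ob M \<Longrightarrow> Cod M (bang M A) = one M" using cart unfolding is_cartesian_def hom_def by auto
lemma bang_uniq: "f \<in> Ar M \<Longrightarrow> Cod M f = one M \<Longrightarrow> f = bang M (Dom M f)"
  using cart unfolding is_cartesian_def hom_def by auto

lemma prd_Ob[simp]: "A \<in> Ob M \<Longrightarrow> B \<in> Ob M \<Longrightarrow> prd M A B \<in> Ob M" using cart unfolding is_cartesian_def by auto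
lemma pr1_Ar[simp]: "A \<in> Ob M \<Longrightarrow> B \<in> Ob M \<Longrightarrow> pr1 M A B \<in> Ar M" using cart unfolding is_cartesian_def hom_def by auto
lemma pr1_Dom[simp]: "A \<in> Ob M \<Longrightarrow> B \<in> Ob M \<Longrightarrow> Dom M (pr1 M A B) = prd M A B" using cart unfolding is_cartesian_def hom_def by auto
lemma pr1_Cod[simp]: "A \<in> Ob M \<Longrightarrow> B \<in> Ob M \<Longrightarrow> Cod M (pr1 M A B) = A" using cart unfolding is_cartesian_def hom_def by auto
lemma pr2_Ar[simp]: "A \<in> Ob M \<Longrightarrow> B \<in> Ob M \<Longrightarrow> pr2 M A B \<in> Ar M" using cart unfolding is_cartesian_def hom_def by auto
lemma pr2_Dom[simp]: "A \<in> Ob M \<Longrightarrow> B \<in> Ob M \<Longrightarrow> Dom M (pr2 M A B) = prd M A B" using cart unfolding is_cartesian_def hom_def by auto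
lemma pr2_Cod[simp]: "A \<in> Ob M \<Longrightarrow> B \<in> Ob M \<Longrightarrow> Cod M (pr2 M A B) = B" using cart unfolding is_cartesian_def hom_def by auto

lemma pair_props: "f \<in> Ar M \<Longrightarrow> g \<in> Ar M \<Longrightarrow> Dom M f = Dom M g \<Longrightarrow>
   pair M f g \<in> hom M (Dom M f) (prd M (Cod M f) (Cod M g)) \<and>
   pr1 M (Cod M f) (Cod M g) \<cdot> pair M f g = f \<and> pr2 M (Cod M f) (Cod M g) \<cdot> pair M f g = g"
proof -
  assume fg: "f \<in> Ar M" "g \<in> Ar M" "Dom M f = Dom M g"
  have all: "\<forall>A\<in>Ob M. \<forall>B\<in>Ob M. \<forall>Z\<in>Ob M. \<forall>f\<in>hom M Z A. \<forall>g\<in>hom M Z B.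
           pair M f g \<in> hom M Z (prd M A B) \<and>
           pr1 M A B \<cdot> pair M f g = f \<and> pr2 M A B \<cdot> pair M f g = g"
    using cart unfolding is_cartesian_def by blast
  have "f \<in> hom M (Dom M f) (Cod M f)" "g \<in> hom M (Dom M f) (Cod M g)" using fg by (auto simp: hom_def)
  then show ?thesis using all[rule_format, of "Cod M f" "Cod M g" "Dom M f" f g] fg by simp
qed

lemma pair_Ar[simp]: "f \<in> Ar M \<Longrightarrow> g \<in> Ar M \<Longrightarrow> Dom M f = Dom M g \<Longrightarrow> pair M f g \<in> Ar M"
  using pair_props by (auto simp: hom_def)
lemma pair_Dom[simp]: "f \<in> Ar M \<Longrightarrow> g \<in> Ar M \<Longrightarrow> Dom M f = Dom M g \<Longrightarrow> Dom M (pair M f g) = Dom M f"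
  using pair_props by (auto simp: hom_def)
lemma pair_Cod[simp]: "f \<in> Ar M \<Longrightarrow> g \<in> Ar M \<Longrightarrow> Dom M f = Dom M g \<Longrightarrow> Cod M (pair M f g) = prd M (Cod M f) (Cod M g)"
  using pair_props by (auto simp: hom_def)
lemma pr1_pair[simp]: "f \<in> Ar M \<Longrightarrow> g \<in> Ar M \<Longrightarrow> Dom M f = Dom M g \<Longrightarrow> Cod M f = A \<Longrightarrow> Cod M g = B \<Longrightarrow> pr1 M A B \<cdot> pair M f g = f"
  using pair_props by auto
lemma pr2_pair[simp]: "f \<in> Ar M \<Longrightarrow> g \<in> Ar M \<Longrightarrow> Dom M f = Dom M g \<Longrightarrow> Cod M f = A \<Longrightarrow> Cod M g = B \<Longrightarrow> pr2 M A B \<cdot> pair M f g = g"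
  using pair_props by auto
lemma pr1_pair_ctx[simp]: "f \<in> Ar M \<Longrightarrow> g \<in> Ar M \<Longrightarrow> Dom M f = Dom M g \<Longrightarrow> Cod M f = A \<Longrightarrow> Cod M g = B \<Longrightarrow>
  r \<in> Ar M \<Longrightarrow> Cod M r = Dom M f \<Longrightarrow> pr1 M A B \<cdot> (pair M f g \<cdot> r) = f \<cdot> r"
  by (rule ctx[OF pr1_pair]) auto
lemma pr2_pair_ctx[simp]: "f \<in> Ar M \<Longrightarrow> g \<in> Ar M \<Longrightarrow> Dom M f = Dom M g \<Longrightarrow> Cod M f = A \<Longrightarrow> Cod M g = B \<Longrightarrow>
  r \<in> Ar M \<Longrightarrow> Cod M r = Dom M f \<Longrightarrow> pr2 M A B \<cdot> (pair M f g \<cdot> r) = g \<cdot> r"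
  by (rule ctx[OF pr2_pair]) auto

lemma pair_uniq: "h \<in> Ar M \<Longrightarrow> Cod M h = prd M A B \<Longrightarrow> A \<in> Ob M \<Longrightarrow> B \<in> Ob M \<Longrightarrow>
   h = pair M (pr1 M A B \<cdot> h) (pr2 M A B \<cdot> h)"
proof -
  assume h: "h \<in> Ar M" "Cod M h = prd M A B" and AB: "A \<in> Ob M" "B \<in> Ob M"
  have "\<forall>Z\<in>Ob M. \<forall>f\<in>hom M Z A. \<forall>g\<in>hom M Z B. \<forall>k\<in>hom M Z (prd M A B).
        pr1 M A B \<cdot> k = f \<and> pr2 M A B \<cdot> k = g \<longrightarrow> k = pair M f g"
    using cart AB unfolding is_cartesian_def by blast
  from this[rule_format, of "Dom M h" "pr1 M A B \<cdot> h" "pr2 M A B \<cdot> h" h] show ?thesis using h AB by (simp add: hom_def)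
qed

lemma prod_eqI: "h \<in> Ar M \<Longrightarrow> k \<in> Ar M \<Longrightarrow> Cod M h = prd M A B \<Longrightarrow> Cod M k = prd M A B \<Longrightarrow> A \<in> Ob M \<Longrightarrow> B \<in> Ob M \<Longrightarrow>
  pr1 M A B \<cdot> h = pr1 M A B \<cdot> k \<Longrightarrow> pr2 M A B \<cdot> h = pr2 M A B \<cdot> k \<Longrightarrow> h = k"
  by (metis pair_uniq)

lemma tens_Ar[simp]: "f \<in> Ar M \<Longrightarrow> g \<in> Ar M \<Longrightarrow> tens M f g \<in> Ar M" unfolding tens_def by simp
lemma tens_Dom[simp]: "f \<in> Ar M \<Longrightarrow> g \<in> Ar M \<Longrightarrow> Dom M (tens M f g) = prd M (Dom M f) (Dom M g)" unfolding tens_def by simp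
lemma tens_Cod[simp]: "f \<in> Ar M \<Longrightarrow> g \<in> Ar M \<Longrightarrow> Cod M (tens M f g) = prd M (Cod M f) (Cod M g)" unfolding tens_def by simp
lemma pr1_tens[simp]: "f \<in> Ar M \<Longrightarrow> g \<in> Ar M \<Longrightarrow> Cod M f = A \<Longrightarrow> Cod M g = B \<Longrightarrow>
  pr1 M A B \<cdot> tens M f g = f \<cdot> pr1 M (Dom M f) (Dom M g)" unfolding tens_def by simp
lemma pr2_tens[simp]: "f \<in> Ar M \<Longrightarrow> g \<in> Ar M \<Longrightarrow> Cod M f = A \<Longrightarrow> Cod M g = B \<Longrightarrow>
  pr2 M A B \<cdot> tens M f g = g \<cdot> pr2 M (Dom M f) (Dom M g)" unfolding tens_def by simp
lemma pr1_tens_ctx[simp]: assumes "f \<in> Ar M" "g \<in> Ar M" "Cod M f = A" "Cod M g = B"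
  "r \<in> Ar M" "Cod M r = prd M (Dom M f) (Dom M g)" shows
  "pr1 M A B \<cdot> (tens M f g \<cdot> r) = f \<cdot> (pr1 M (Dom M f) (Dom M g) \<cdot> r)"
proof -
  have "pr1 M A B \<cdot> (tens M f g \<cdot> r) = (f \<cdot> pr1 M (Dom M f) (Dom M g)) \<cdot> r"
    by (rule ctx[OF pr1_tens]) (use assms in auto)
  also have "\<dots> = f \<cdot> (pr1 M (Dom M f) (Dom M g) \<cdot> r)" using assms by simp
  finally show ?thesis .
qed
lemma pr2_tens_ctx[simp]: assumes "f \<in> Ar M" "g \<in> Ar M" "Cod M f = A" "Cod M g = B"
  "r \<in> Ar M" "Cod M r = prd M (Dom M f) (Dom M g)" shows
  "pr2 M A B \<cdot> (tens M f g \<cdot> r) = g \<cdot> (pr2 M (Dom M f) (Dom M g) \<cdot> r)"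
proof -
  have "pr2 M A B \<cdot> (tens M f g \<cdot> r) = (g \<cdot> pr2 M (Dom M f) (Dom M g)) \<cdot> r"
    by (rule ctx[OF pr2_tens]) (use assms in auto)
  also have "\<dots> = g \<cdot> (pr2 M (Dom M f) (Dom M g) \<cdot> r)" using assms by simp
  finally show ?thesis .
qed

lemma assoc_Ar[simp]: "A \<in> Ob M \<Longrightarrow> B \<in> Ob M \<Longrightarrow> C \<in> Ob M \<Longrightarrow> assoc M A B C \<in> Ar M"
  unfolding assoc_def by simp
lemma assoc_Dom[simp]: "A \<in> Ob M \<Longrightarrow> B \<in> Ob M \<Longrightarrow> C \<in> Ob M \<Longrightarrow> Dom M (assoc M A B C) = prd M (prd M A B) C"
  unfolding assoc_def by simp
lemma assoc_Cod[simp]: "A \<in> Ob M \<Longrightarrow> B \<in> Ob M \<Longrightarrow> C \<in> Ob M \<Longrightarrow> Cod M (assoc M A B C) = prd M A (prd M B C)"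
  unfolding assoc_def by simp
lemma pr1_assoc: "A \<in> Ob M \<Longrightarrow> B \<in> Ob M \<Longrightarrow> C \<in> Ob M \<Longrightarrow> r \<in> Ar M \<Longrightarrow> Cod M r = prd M (prd M A B) C \<Longrightarrow>
  pr1 M A (prd M B C) \<cdot> (assoc M A B C \<cdot> r) = pr1 M A B \<cdot> (pr1 M (prd M A B) C \<cdot> r)"
  unfolding assoc_def by simp
lemma pr12_assoc: "A \<in> Ob M \<Longrightarrow> B \<in> Ob M \<Longrightarrow> C \<in> Ob M \<Longrightarrow> r \<in> Ar M \<Longrightarrow> Cod M r = prd M (prd M A B) C \<Longrightarrow>
  pr1 M B C \<cdot> (pr2 M A (prd M B C) \<cdot> (assoc M A B C \<cdot> r)) = pr2 M A B \<cdot> (pr1 M (prd M A B) C \<cdot> r)"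
  unfolding assoc_def by simp
lemma pr22_assoc: "A \<in> Ob M \<Longrightarrow> B \<in> Ob M \<Longrightarrow> C \<in> Ob M \<Longrightarrow> r \<in> Ar M \<Longrightarrow> Cod M r = prd M (prd M A B) C \<Longrightarrow>
  pr2 M B C \<cdot> (pr2 M A (prd M B C) \<cdot> (assoc M A B C \<cdot> r)) = pr2 M (prd M A B) C \<cdot> r"
  unfolding assoc_def by simp


lemma ctx2: "a \<cdot> b = c \<cdot> d \<Longrightarrow> r \<in> Ar M \<Longrightarrow> b \<in> Ar M \<Longrightarrow> a \<in> Ar M \<Longrightarrow> d \<in> Ar M \<Longrightarrow> c \<in> Ar M \<Longrightarrow>
  Cod M r = Dom M b \<Longrightarrow> Cod M b = Dom M a \<Longrightarrow> Cod M r = Dom M d \<Longrightarrow> Cod M d = Dom M c \<Longrightarrow>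
  a \<cdot> (b \<cdot> r) = c \<cdot> (d \<cdot> r)"
  by (metis comp_assoc)

lemma bang_comp: "f \<in> Ar M \<Longrightarrow> Cod M f = A \<Longrightarrow> A \<in> Ob M \<Longrightarrow> bang M A \<cdot> f = bang M (Dom M f)"
  using bang_uniq[of "bang M A \<cdot> f"] by auto

lemma Eqv_Ar: "f \<in> Eqv M \<Longrightarrow> f \<in> Ar M"
  using cwe unfolding cartesian_with_equivalences_def by auto
lemma iso_Eqv: "is_iso M f \<Longrightarrow> f \<in> Eqv M"
  using cwe unfolding cartesian_with_equivalences_def by auto
lemma Eqv_comp: "f \<in> Eqv M \<Longrightarrow> g \<in> Eqv M \<Longrightarrow> Cod M f = Dom M g \<Longrightarrow> g \<cdot> f \<in> Eqv M"
  using cwe Eqv_Ar unfolding cartesian_with_equivalences_def by blast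
lemma Eqv_cancel: "f \<in> Ar M \<Longrightarrow> g \<in> Eqv M \<Longrightarrow> Cod M f = Dom M g \<Longrightarrow> g \<cdot> f \<in> Eqv M \<Longrightarrow> f \<in> Eqv M"
  using cwe Eqv_Ar unfolding cartesian_with_equivalences_def by blast
lemma Eqv_tens: "f \<in> Eqv M \<Longrightarrow> g \<in> Eqv M \<Longrightarrow> tens M f g \<in> Eqv M"
  using cwe unfolding cartesian_with_equivalences_def by blast
lemma Id_Eqv: "A \<in> Ob M \<Longrightarrow> Idm M A \<in> Eqv M"
  by (rule iso_Eqv) (auto simp: is_iso_def hom_def intro!: bexI[of _ "Idm M A"])

lemma pair_id_bang_iso: "A \<in> Ob M \<Longrightarrow> is_iso M (pair M (Idm M A) (bang M A))"
proof -
  assume A: "A \<in> Ob M"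
  let ?p = "pair M (Idm M A) (bang M A)"
  have "pr1 M A (one M) \<in> hom M (Cod M ?p) (Dom M ?p)" using A by (simp add: hom_def)
  moreover have "pr1 M A (one M) \<cdot> ?p = Idm M (Dom M ?p)" using A by simp
  moreover have "?p \<cdot> pr1 M A (one M) = Idm M (Cod M ?p)"
  proof (rule prod_eqI[of _ _ A "one M"])
    show "pr2 M A (one M) \<cdot> (?p \<cdot> pr1 M A (one M)) = pr2 M A (one M) \<cdot> Idm M (Cod M ?p)"
      using A by (simp add: bang_comp) (metis bang_uniq pr2_Ar pr2_Cod pr2_Dom one_Ob prd_Ob)
  qed (use A in simp_all)
  ultimately show ?thesis using A unfolding is_iso_def by (intro conjI bexI[of _ "pr1 M A (one M)"]) simp_all
qed

end

definition pp1 :: "('o,'a) cmc \<Rightarrow> ('o,'a) colax \<Rightarrow> nat \<Rightarrow> nat \<Rightarrow> 'a" where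
  "pp1 M X a b = Comp M (pr1 M (hob X a) (hob X b)) (xi X a b)"
definition pp2 :: "('o,'a) cmc \<Rightarrow> ('o,'a) colax \<Rightarrow> nat \<Rightarrow> nat \<Rightarrow> 'a" where
  "pp2 M X a b = Comp M (pr2 M (hob X a) (hob X b)) (xi X a b)"
definition mid :: "('o,'a) cmc \<Rightarrow> ('o,'a) colax \<Rightarrow> nat \<Rightarrow> nat \<Rightarrow> nat \<Rightarrow> 'a" where
  "mid M X a k c = Comp M (pp1 M X k c) (pp2 M X a (k + c))"

locale hty = cwe +
  fixes X
  assumes hX: "is_htymon M X"
begin

lemma hob_Ob[simp]: "hob X n \<in> Ob M" using hX unfolding is_htymon_def by auto
lemma har_hom: "delta_mor t \<Longrightarrow> har X t \<in> hom M (hob X (fst t)) (hob X (fst (snd t)))"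
  using hX unfolding is_htymon_def by (cases t) auto
lemma har_Ar[simp]: "delta_mor t \<Longrightarrow> har X t \<in> Ar M" using har_hom by (auto simp: hom_def)
lemma har_Dom[simp]: "delta_mor t \<Longrightarrow> Dom M (har X t) = hob X (fst t)" using har_hom by (auto simp: hom_def)
lemma har_Cod[simp]: "delta_mor t \<Longrightarrow> Cod M (har X t) = hob X (fst (snd t))" using har_hom by (auto simp: hom_def)
lemma har_undef: "\<not> delta_mor t \<Longrightarrow> har X t = undefined" using hX unfolding is_htymon_def by blast
lemma har_id[simp]: "har X (delta_id n) = Idm M (hob X n)" using hX unfolding is_htymon_def by auto
lemma har_comp: "delta_mor f \<Longrightarrow> delta_mor g \<Longrightarrow> fst (snd f) = fst g \<Longrightarrow> har X (scomp g f) = har X g \<cdot> har X f"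
  using hX unfolding is_htymon_def by blast
lemma xi_Ar[simp]: "xi X a b \<in> Ar M" using hX unfolding is_htymon_def hom_def by auto
lemma xi_Dom[simp]: "Dom M (xi X a b) = hob X (a + b)" using hX unfolding is_htymon_def hom_def by auto
lemma xi_Cod[simp]: "Cod M (xi X a b) = prd M (hob X a) (hob X b)" using hX unfolding is_htymon_def hom_def by auto
lemma xi0_Ar[simp]: "xi0 X \<in> Ar M" using hX unfolding is_htymon_def hom_def by auto
lemma xi0_Dom[simp]: "Dom M (xi0 X) = hob X 0" using hX unfolding is_htymon_def hom_def by auto
lemma xi0_Cod[simp]: "Cod M (xi0 X) = one M" using hX unfolding is_htymon_def hom_def by auto
lemma xi0_bang: "xi0 X = bang M (hob X 0)" using bang_uniq[of "xi0 X"] by simp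
lemma xi_nat: "delta_mor f \<Longrightarrow> delta_mor g \<Longrightarrow>
  tens M (har X f) (har X g) \<cdot> xi X (fst f) (fst g) = xi X (fst (snd f)) (fst (snd g)) \<cdot> har X (dsum f g)"
  using hX unfolding is_htymon_def by blast
lemma coassoc: "assoc M (hob X l) (hob X m) (hob X n) \<cdot> (tens M (xi X l m) (Idm M (hob X n)) \<cdot> xi X (l + m) n) =
   tens M (Idm M (hob X l)) (xi X m n) \<cdot> xi X l (m + n)"
  using hX unfolding is_htymon_def by blast
lemma counit1: "pr2 M (one M) (hob X n) \<cdot> (tens M (xi0 X) (Idm M (hob X n)) \<cdot> xi X 0 n) = Idm M (hob X n)"
  using hX unfolding is_htymon_def by blast
lemma counit2: "pr1 M (hob X n) (one M) \<cdot> (tens M (Idm M (hob X n)) (xi0 X) \<cdot> xi X n 0) = Idm M (hob X n)"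
  using hX unfolding is_htymon_def by blast
lemma xi_Eqv: "xi X m n \<in> Eqv M" using hX unfolding is_htymon_def by auto
lemma xi0_Eqv: "xi0 X \<in> Eqv M" using hX unfolding is_htymon_def by auto

lemma pp1_Ar[simp]: "pp1 M X a b \<in> Ar M" unfolding pp1_def by simp
lemma pp1_Dom[simp]: "Dom M (pp1 M X a b) = hob X (a + b)" unfolding pp1_def by simp
lemma pp1_Cod[simp]: "Cod M (pp1 M X a b) = hob X a" unfolding pp1_def by simp
lemma pp2_Ar[simp]: "pp2 M X a b \<in> Ar M" unfolding pp2_def by simp
lemma pp2_Dom[simp]: "Dom M (pp2 M X a b) = hob X (a + b)" unfolding pp2_def by simp
lemma pp2_Cod[simp]: "Cod M (pp2 M X a b) = hob X b" unfolding pp2_def by simp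
lemma mid_Ar[simp]: "mid M X a k c \<in> Ar M" unfolding mid_def by simp
lemma mid_Dom[simp]: "Dom M (mid M X a k c) = hob X (a + (k + c))" unfolding mid_def by simp
lemma mid_Cod[simp]: "Cod M (mid M X a k c) = hob X k" unfolding mid_def by simp

lemma pp1_nat: "delta_mor f \<Longrightarrow> delta_mor g \<Longrightarrow>
  pp1 M X (fst (snd f)) (fst (snd g)) \<cdot> har X (dsum f g) = har X f \<cdot> pp1 M X (fst f) (fst g)"
proof -
  assume fg: "delta_mor f" "delta_mor g"
  have "pp1 M X (fst (snd f)) (fst (snd g)) \<cdot> har X (dsum f g)
     = pr1 M (hob X (fst (snd f))) (hob X (fst (snd g))) \<cdot> (xi X (fst (snd f)) (fst (snd g)) \<cdot> har X (dsum f g))"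
    unfolding pp1_def using fg by simp
  also have "\<dots> = pr1 M (hob X (fst (snd f))) (hob X (fst (snd g))) \<cdot> (tens M (har X f) (har X g) \<cdot> xi X (fst f) (fst g))"
    using xi_nat[OF fg] by simp
  also have "\<dots> = har X f \<cdot> pp1 M X (fst f) (fst g)" unfolding pp1_def using fg by simp
  finally show ?thesis .
qed

lemma pp2_nat: "delta_mor f \<Longrightarrow> delta_mor g \<Longrightarrow>
  pp2 M X (fst (snd f)) (fst (snd g)) \<cdot> har X (dsum f g) = har X g \<cdot> pp2 M X (fst f) (fst g)"
proof -
  assume fg: "delta_mor f" "delta_mor g"
  have "pp2 M X (fst (snd f)) (fst (snd g)) \<cdot> har X (dsum f g)
     = pr2 M (hob X (fst (snd f))) (hob X (fst (snd g))) \<cdot> (xi X (fst (snd f)) (fst (snd g)) \<cdot> har X (dsum f g))"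
    unfolding pp2_def using fg by simp
  also have "\<dots> = pr2 M (hob X (fst (snd f))) (hob X (fst (snd g))) \<cdot> (tens M (har X f) (har X g) \<cdot> xi X (fst f) (fst g))"
    using xi_nat[OF fg] by simp
  also have "\<dots> = har X g \<cdot> pp2 M X (fst f) (fst g)" unfolding pp2_def using fg by simp
  finally show ?thesis .
qed

lemma pp2_0: "pp2 M X 0 n = Idm M (hob X n)"
  using counit1[of n] unfolding pp2_def by simp

lemma pp1_0: "pp1 M X n 0 = Idm M (hob X n)"
  using counit2[of n] unfolding pp1_def by simp

lemma C1X: "pp1 M X l m \<cdot> pp1 M X (l + m) n = pp1 M X l (m + n)"
proof -
  have "pp1 M X l m \<cdot> pp1 M X (l + m) n = pr1 M (hob X l) (prd M (hob X m) (hob X n)) \<cdot>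
      (assoc M (hob X l) (hob X m) (hob X n) \<cdot> (tens M (xi X l m) (Idm M (hob X n)) \<cdot> xi X (l + m) n))"
    unfolding pp1_def by (simp add: pr1_assoc)
  also have "\<dots> = pr1 M (hob X l) (prd M (hob X m) (hob X n)) \<cdot> (tens M (Idm M (hob X l)) (xi X m n) \<cdot> xi X l (m + n))"
    by (simp only: coassoc)
  also have "\<dots> = pp1 M X l (m + n)" unfolding pp1_def by simp
  finally show ?thesis .
qed

lemma C2X: "pp2 M X l m \<cdot> pp1 M X (l + m) n = pp1 M X m n \<cdot> pp2 M X l (m + n)"
proof -
  have "pp2 M X l m \<cdot> pp1 M X (l + m) n = pr1 M (hob X m) (hob X n) \<cdot> (pr2 M (hob X l) (prd M (hob X m) (hob X n)) \<cdot>
      (assoc M (hob X l) (hob X m) (hob X n) \<cdot> (tens M (xi X l m) (Idm M (hob X n)) \<cdot> xi X (l + m) n)))"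
    unfolding pp1_def pp2_def by (simp add: pr12_assoc)
  also have "\<dots> = pr1 M (hob X m) (hob X n) \<cdot> (pr2 M (hob X l) (prd M (hob X m) (hob X n)) \<cdot> (tens M (Idm M (hob X l)) (xi X m n) \<cdot> xi X l (m + n)))"
    by (simp only: coassoc)
  also have "\<dots> = pp1 M X m n \<cdot> pp2 M X l (m + n)" unfolding pp1_def pp2_def by simp
  finally show ?thesis .
qed

lemma C3X: "pp2 M X m n \<cdot> pp2 M X l (m + n) = pp2 M X (l + m) n"
proof -
  have "pp2 M X m n \<cdot> pp2 M X l (m + n) = pr2 M (hob X m) (hob X n) \<cdot> (pr2 M (hob X l) (prd M (hob X m) (hob X n)) \<cdot> (tens M (Idm M (hob X l)) (xi X m n) \<cdot> xi X l (m + n)))"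
    unfolding pp2_def by simp
  also have "\<dots> = pr2 M (hob X m) (hob X n) \<cdot> (pr2 M (hob X l) (prd M (hob X m) (hob X n)) \<cdot>
      (assoc M (hob X l) (hob X m) (hob X n) \<cdot> (tens M (xi X l m) (Idm M (hob X n)) \<cdot> xi X (l + m) n)))"
    by (simp only: coassoc)
  also have "\<dots> = pp2 M X (l + m) n" unfolding pp2_def by (simp add: pr22_assoc)
  finally show ?thesis .
qed


lemma mid_nat: "delta_mor f \<Longrightarrow> delta_mor g \<Longrightarrow> delta_mor h \<Longrightarrow>
  mid M X (fst (snd f)) (fst (snd g)) (fst (snd h)) \<cdot> har X (dsum f (dsum g h)) = har X g \<cdot> mid M X (fst f) (fst g) (fst h)"
proof -
  assume d: "delta_mor f" "delta_mor g" "delta_mor h"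
  have "mid M X (fst (snd f)) (fst (snd g)) (fst (snd h)) \<cdot> har X (dsum f (dsum g h))
     = pp1 M X (fst (snd g)) (fst (snd h)) \<cdot> (pp2 M X (fst (snd f)) (fst (snd g) + fst (snd h)) \<cdot> har X (dsum f (dsum g h)))"
    unfolding mid_def using d by simp
  also have "\<dots> = pp1 M X (fst (snd g)) (fst (snd h)) \<cdot> (har X (dsum g h) \<cdot> pp2 M X (fst f) (fst g + fst h))"
    using pp2_nat[of f "dsum g h"] d by simp
  also have "\<dots> = (pp1 M X (fst (snd g)) (fst (snd h)) \<cdot> har X (dsum g h)) \<cdot> pp2 M X (fst f) (fst g + fst h)"
    using d by simp
  also have "\<dots> = (har X g \<cdot> pp1 M X (fst g) (fst h)) \<cdot> pp2 M X (fst f) (fst g + fst h)"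
    using pp1_nat[of g h] d by simp
  also have "\<dots> = har X g \<cdot> mid M X (fst f) (fst g) (fst h)"
    unfolding mid_def using d by simp
  finally show ?thesis .
qed

lemma mid0: "mid M X 0 n 0 = Idm M (hob X n)"
  unfolding mid_def by (simp add: pp1_0 pp2_0)

lemma mid_mid: "N = a + (k + c) \<Longrightarrow> mid M X a k c \<cdot> mid M X a' N c' = mid M X (a' + a) k (c + c')"
proof -
  assume N: "N = a + (k + c)"
  have "mid M X a k c \<cdot> mid M X a' N c' = pp1 M X k c \<cdot> (pp2 M X a (k + c) \<cdot> (pp1 M X (a + (k + c)) c' \<cdot> pp2 M X a' (a + (k + c) + c')))"
    unfolding mid_def N by simp
  also have "\<dots> = pp1 M X k c \<cdot> (pp1 M X (k + c) c' \<cdot> (pp2 M X a (k + c + c') \<cdot> pp2 M X a' (a + (k + c) + c')))"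
    by (subst ctx2[OF C2X]) (simp_all add: add.assoc)
  also have "\<dots> = pp1 M X k (c + c') \<cdot> (pp2 M X a (k + c + c') \<cdot> pp2 M X a' (a + (k + c + c')))"
    by (subst ctx[OF C1X]) (simp_all add: add.assoc)
  also have "\<dots> = pp1 M X k (c + c') \<cdot> pp2 M X (a' + a) (k + c + c')"
    by (simp only: C3X)
  also have "\<dots> = mid M X (a' + a) k (c + c')"
    unfolding mid_def by (simp add: add.assoc)
  finally show ?thesis .
qed

end

definition H2S :: "('o,'a) cmc \<Rightarrow> ('o,'a) colax \<Rightarrow> ('o,'a) simpobj" where
  "H2S M X = \<lparr> sob = hob X, sar = (\<lambda>t. if deltap_mor t then Comp M (mid M X 1 (fst t) 1) (har X (Gm t)) else undefined) \<rparr>"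

context hty begin

lemma sob_H2S[simp]: "sob (H2S M X) = hob X" unfolding H2S_def by simp
lemma sar_H2S: "deltap_mor t \<Longrightarrow> sar (H2S M X) t = mid M X 1 (fst t) 1 \<cdot> har X (Gm t)"
  unfolding H2S_def by simp
lemma mid11_Dom[simp]: "Dom M (mid M X 1 k 1) = hob X (Suc (Suc k))" by simp

lemma sarH_hom: "deltap_mor t \<Longrightarrow> sar (H2S M X) t \<in> hom M (hob X (fst (snd t))) (hob X (fst t))"
  by (simp add: sar_H2S hom_def)

lemma sarH_id: "sar (H2S M X) (deltap_id n) = Idm M (hob X n)"
proof -
  have "sar (H2S M X) (deltap_id n) = mid M X 1 n 1 \<cdot> har X (dsum ee (dsum (delta_id n) ee))"
  proof -
    have "Gm (deltap_id n) = dsum ee (dsum (delta_id n) ee)"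
      using Gm_dstar[OF dm_id[of n, unfolded delta_id_def]] dstar_id[of n] unfolding delta_id_def by simp
    then show ?thesis by (simp add: sar_H2S)
  qed
  also have "\<dots> = har X (delta_id n) \<cdot> mid M X 0 n 0"
    using mid_nat[of ee "delta_id n" ee] by simp
  also have "\<dots> = Idm M (hob X n)" by (simp add: mid0)
  finally show ?thesis .
qed

lemma sarH_comp: "deltap_mor f \<Longrightarrow> deltap_mor g \<Longrightarrow> fst (snd f) = fst g \<Longrightarrow>
  sar (H2S M X) (scomp g f) = sar (H2S M X) f \<cdot> sar (H2S M X) g"
proof -
  assume df: "deltap_mor f" and dg: "deltap_mor g" and fg: "fst (snd f) = fst g"
  obtain m n lf where f: "f = (m, n, lf)" by (cases f) auto
  obtain p lg where g: "g = (n, p, lg)" using fg f by (cases g) auto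
  define D where "D = dsum (delta_id 1) (dsum (Gm f) (delta_id 1))"
  define C where "C = dsum (cc 2) (dsum (delta_id m) (cc 2))"
  have dD: "delta_mor D" "fst D = Suc (Suc n)" "fst (snd D) = Suc (Suc (Suc (Suc m)))"
    unfolding D_def using df f by auto
  have dC: "delta_mor C" "fst C = Suc (Suc (Suc (Suc m)))" "fst (snd C) = Suc (Suc m)"
    unfolding C_def by auto
  have "sar (H2S M X) f \<cdot> sar (H2S M X) g = mid M X 1 m 1 \<cdot> (har X (Gm f) \<cdot> (mid M X 1 n 1 \<cdot> har X (Gm g)))"
    using df dg f g by (simp add: sar_H2S)
  also have "\<dots> = mid M X 1 m 1 \<cdot> (mid M X 1 (Suc (Suc m)) 1 \<cdot> (har X D \<cdot> har X (Gm g)))"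
  proof -
    have "har X (Gm f) \<cdot> mid M X 1 n 1 = mid M X 1 (Suc (Suc m)) 1 \<cdot> har X D"
      using mid_nat[of "delta_id 1" "Gm f" "delta_id 1"] df f unfolding D_def by simp
    then show ?thesis using df dg f g dD by (subst ctx2) simp_all
  qed
  also have "\<dots> = mid M X 2 m 2 \<cdot> (har X D \<cdot> har X (Gm g))"
    using mid_mid[of "Suc (Suc m)" 1 m 1 1 1] dD dg g
    by (subst ctx) (simp_all add: numeral_2_eq_2)
  also have "\<dots> = mid M X 2 m 2 \<cdot> har X (scomp D (Gm g))"
    using har_comp[of "Gm g" D] dD dg g by simp
  also have "\<dots> = mid M X 1 m 1 \<cdot> (har X C \<cdot> har X (scomp D (Gm g)))"
  proof -
    have "mid M X 1 m 1 \<cdot> har X C = mid M X 2 m 2"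
      using mid_nat[of "cc 2" "delta_id m" "cc 2"] unfolding C_def by (simp add: mid0)
    then show ?thesis using dC dD dg g by (subst ctx) simp_all
  qed
  also have "\<dots> = mid M X 1 m 1 \<cdot> har X (Gm (scomp g f))"
    using har_comp[of "scomp D (Gm g)" C] Gm_comp[of m n lf p lg] df dg f g dC dD
    unfolding C_def D_def by simp
  also have "\<dots> = sar (H2S M X) (scomp g f)"
    using df dg f g by (simp add: sar_H2S)
  finally show ?thesis by simp
qed


end

context cwe begin

lemma pair_comp: "f \<in> Ar M \<Longrightarrow> g \<in> Ar M \<Longrightarrow> Dom M f = Dom M g \<Longrightarrow> h \<in> Ar M \<Longrightarrow> Cod M h = Dom M f \<Longrightarrow>
  pair M f g \<cdot> h = pair M (f \<cdot> h) (g \<cdot> h)"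
  by (rule prod_eqI[of _ _ "Cod M f" "Cod M g"]) simp_all

lemma tens_pair: "f \<in> Ar M \<Longrightarrow> g \<in> Ar M \<Longrightarrow> a \<in> Ar M \<Longrightarrow> b \<in> Ar M \<Longrightarrow> Dom M a = Dom M b \<Longrightarrow>
  Cod M a = Dom M f \<Longrightarrow> Cod M b = Dom M g \<Longrightarrow> tens M f g \<cdot> pair M a b = pair M (f \<cdot> a) (g \<cdot> b)"
  by (rule prod_eqI[of _ _ "Cod M f" "Cod M g"]) simp_all

lemma tupl_typ: "Z \<in> Ob M \<Longrightarrow> A \<in> Ob M \<Longrightarrow> (\<And>j. j < k \<Longrightarrow> g j \<in> Ar M \<and> Dom M (g j) = Z \<and> Cod M (g j) = A) \<Longrightarrow>
  tupl M Z g k \<in> Ar M \<and> Dom M (tupl M Z g k) = Z \<and> Cod M (tupl M Z g k) = pw M A k"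
  by (induction k) auto

lemma tupl_cong: "(\<And>j. j < k \<Longrightarrow> g j = g' j) \<Longrightarrow> tupl M Z g k = tupl M Z g' k"
  by (induction k) auto

lemma tupl_comp: "Z \<in> Ob M \<Longrightarrow> A \<in> Ob M \<Longrightarrow> (\<And>j. j < k \<Longrightarrow> g j \<in> Ar M \<and> Dom M (g j) = Z \<and> Cod M (g j) = A) \<Longrightarrow>
  h \<in> Ar M \<Longrightarrow> Cod M h = Z \<Longrightarrow> tupl M Z g k \<cdot> h = tupl M (Dom M h) (\<lambda>j. g j \<cdot> h) k"
proof (induction k)
  case 0 then show ?case by (simp add: bang_comp)
next
  case (Suc k)
  have t: "tupl M Z g k \<in> Ar M \<and> Dom M (tupl M Z g k) = Z \<and> Cod M (tupl M Z g k) = pw M A k"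
    using tupl_typ[of Z A k g] Suc.prems by auto
  have "tupl M Z g (Suc k) \<cdot> h = pair M (tupl M Z g k \<cdot> h) (g k \<cdot> h)"
    using t Suc.prems by (simp add: pair_comp)
  then show ?case using Suc by simp
qed

lemma pr1_assoc0: "A \<in> Ob M \<Longrightarrow> B \<in> Ob M \<Longrightarrow> C \<in> Ob M \<Longrightarrow>
  pr1 M A (prd M B C) \<cdot> assoc M A B C = pr1 M A B \<cdot> pr1 M (prd M A B) C"
  unfolding assoc_def by simp
lemma pr12_assoc0: "A \<in> Ob M \<Longrightarrow> B \<in> Ob M \<Longrightarrow> C \<in> Ob M \<Longrightarrow>
  pr1 M B C \<cdot> (pr2 M A (prd M B C) \<cdot> assoc M A B C) = pr2 M A B \<cdot> pr1 M (prd M A B) C"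
  unfolding assoc_def by simp
lemma pr22_assoc0: "A \<in> Ob M \<Longrightarrow> B \<in> Ob M \<Longrightarrow> C \<in> Ob M \<Longrightarrow>
  pr2 M B C \<cdot> (pr2 M A (prd M B C) \<cdot> assoc M A B C) = pr2 M (prd M A B) C"
  unfolding assoc_def by simp

lemma assoc_iso: "A \<in> Ob M \<Longrightarrow> B \<in> Ob M \<Longrightarrow> C \<in> Ob M \<Longrightarrow> is_iso M (assoc M A B C)"
proof -
  assume o: "A \<in> Ob M" "B \<in> Ob M" "C \<in> Ob M"
  define P where "P = prd M A (prd M B C)"
  define inv where "inv = pair M (pair M (pr1 M A (prd M B C)) (pr1 M B C \<cdot> pr2 M A (prd M B C))) (pr2 M B C \<cdot> pr2 M A (prd M B C))"
  have i: "inv \<in> Ar M" "Dom M inv = prd M A (prd M B C)" "Cod M inv = prd M (prd M A B) C"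
    unfolding inv_def using o by simp_all
  have e1: "inv \<cdot> assoc M A B C = Idm M (prd M (prd M A B) C)"
  proof (rule prod_eqI[of _ _ "prd M A B" C])
    show "pr1 M (prd M A B) C \<cdot> (inv \<cdot> assoc M A B C) = pr1 M (prd M A B) C \<cdot> Idm M (prd M (prd M A B) C)"
      by (rule prod_eqI[of _ _ A B]) (use o in \<open>simp_all add: inv_def pr1_assoc pr1_assoc0 pr12_assoc pr12_assoc0\<close>)
  qed (use o i in \<open>simp_all add: inv_def pr22_assoc pr22_assoc0\<close>)
  have e2: "assoc M A B C \<cdot> inv = Idm M (prd M A (prd M B C))"
  proof (rule prod_eqI[of _ _ A "prd M B C"])
    show "pr2 M A (prd M B C) \<cdot> (assoc M A B C \<cdot> inv) = pr2 M A (prd M B C) \<cdot> Idm M (prd M A (prd M B C))"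
      by (rule prod_eqI[of _ _ B C]) (use o i in \<open>simp_all add: pr12_assoc pr12_assoc0 pr22_assoc pr22_assoc0, simp_all add: inv_def\<close>)
  qed (use o i in \<open>simp_all add: pr1_assoc pr1_assoc0, simp_all add: inv_def\<close>)
  show ?thesis unfolding is_iso_def using o i e1 e2 by (intro conjI bexI[of _ inv]) (simp_all add: hom_def)
qed

end

definition is_special0 :: "('o,'a) cmc \<Rightarrow> ('o,'a) simpobj \<Rightarrow> bool" where
  "is_special0 M Y \<longleftrightarrow>
     (\<forall>n. sob Y n \<in> Ob M) \<and>
     (\<forall>m n l. deltap_mor (m, n, l) \<longrightarrow> sar Y (m, n, l) \<in> hom M (sob Y n) (sob Y m)) \<and>
     (\<forall>t. \<not> deltap_mor t \<longrightarrow> sar Y t = undefined) \<and>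
     (\<forall>n. sar Y (deltap_id n) = Idm M (sob Y n)) \<and>
     (\<forall>f g. deltap_mor f \<and> deltap_mor g \<and> fst (snd f) = fst g \<longrightarrow>
        sar Y (scomp g f) = Comp M (sar Y f) (sar Y g))"

lemma is_special_iff: "is_special M Y \<longleftrightarrow> is_special0 M Y \<and> (\<forall>n. tupl M (sob Y n) (\<lambda>j. sar Y (beta n j)) n \<in> Eqv M)"
  unfolding is_special_def is_special0_def by blast

locale spc0 = cwe +
  fixes Y
  assumes hY0: "is_special0 M Y"
begin

lemma sob_Ob[simp]: "sob Y n \<in> Ob M" using hY0 unfolding is_special0_def by auto
lemma sar_hom: "deltap_mor t \<Longrightarrow> sar Y t \<in> hom M (sob Y (fst (snd t))) (sob Y (fst t))"
  using hY0 unfolding is_special0_def by (cases t) auto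
lemma sar_Ar[simp]: "deltap_mor t \<Longrightarrow> sar Y t \<in> Ar M" using sar_hom by (auto simp: hom_def)
lemma sar_Dom[simp]: "deltap_mor t \<Longrightarrow> Dom M (sar Y t) = sob Y (fst (snd t))" using sar_hom by (auto simp: hom_def)
lemma sar_Cod[simp]: "deltap_mor t \<Longrightarrow> Cod M (sar Y t) = sob Y (fst t)" using sar_hom by (auto simp: hom_def)
lemma sar_undef: "\<not> deltap_mor t \<Longrightarrow> sar Y t = undefined" using hY0 unfolding is_special0_def by blast
lemma sar_id[simp]: "sar Y (deltap_id n) = Idm M (sob Y n)" using hY0 unfolding is_special0_def by blast
lemma sar_comp: "deltap_mor f \<Longrightarrow> deltap_mor g \<Longrightarrow> fst (snd f) = fst g \<Longrightarrow> sar Y (scomp g f) = sar Y f \<cdot> sar Y g"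
  using hY0 unfolding is_special0_def by blast

lemma S_C1: "sar Y (al1 l m) \<cdot> sar Y (al1 (l + m) n) = sar Y (al1 l (m + n))"
  using sar_comp[of "al1 l m" "al1 (l + m) n"] C1[of l m n] by simp
lemma S_C2: "sar Y (al2 l m) \<cdot> sar Y (al1 (l + m) n) = sar Y (al1 m n) \<cdot> sar Y (al2 l (m + n))"
  using sar_comp[of "al2 l m" "al1 (l + m) n"] sar_comp[of "al1 m n" "al2 l (m + n)"] C2[of l m n] by simp
lemma S_C3: "sar Y (al2 m n) \<cdot> sar Y (al2 l (m + n)) = sar Y (al2 (l + m) n)"
  using sar_comp[of "al2 m n" "al2 l (m + n)"] C3[of l m n] by simp

lemma S_nat1: "delta_mor f \<Longrightarrow> delta_mor g \<Longrightarrow>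
  sar Y (dstar f) \<cdot> sar Y (al1 (fst f) (fst g)) = sar Y (al1 (fst (snd f)) (fst (snd g))) \<cdot> sar Y (dstar (dsum f g))"
proof -
  assume d: "delta_mor f" "delta_mor g"
  obtain m m' lf where f: "f = (m, m', lf)" by (cases f) auto
  obtain n n' lg where g: "g = (n, n', lg)" by (cases g) auto
  show ?thesis
    using sar_comp[of "dstar f" "al1 (fst f) (fst g)"] sar_comp[of "al1 (fst (snd f)) (fst (snd g))" "dstar (dsum f g)"]
      nat1[of m m' lf n n' lg] d f g by simp
qed

lemma S_nat2: "delta_mor f \<Longrightarrow> delta_mor g \<Longrightarrow>
  sar Y (dstar g) \<cdot> sar Y (al2 (fst f) (fst g)) = sar Y (al2 (fst (snd f)) (fst (snd g))) \<cdot> sar Y (dstar (dsum f g))"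
proof -
  assume d: "delta_mor f" "delta_mor g"
  obtain m m' lf where f: "f = (m, m', lf)" by (cases f) auto
  obtain n n' lg where g: "g = (n, n', lg)" by (cases g) auto
  show ?thesis
    using sar_comp[of "dstar g" "al2 (fst f) (fst g)"] sar_comp[of "al2 (fst (snd f)) (fst (snd g))" "dstar (dsum f g)"]
      nat2[of m m' lf n n' lg] d f g by simp
qed

end

definition S2H :: "('o,'a) cmc \<Rightarrow> ('o,'a) simpobj \<Rightarrow> ('o,'a) colax" where
  "S2H M Y = \<lparr> hob = sob Y, har = (\<lambda>t. if delta_mor t then sar Y (dstar t) else undefined),
     xi = (\<lambda>m n. pair M (sar Y (al1 m n)) (sar Y (al2 m n))), xi0 = bang M (sob Y 0) \<rparr>"

context spc0 begin

lemma hob_S2H[simp]: "hob (S2H M Y) = sob Y" unfolding S2H_def by simp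
lemma har_S2H: "delta_mor t \<Longrightarrow> har (S2H M Y) t = sar Y (dstar t)" unfolding S2H_def by simp
lemma xi_S2H: "xi (S2H M Y) m n = pair M (sar Y (al1 m n)) (sar Y (al2 m n))" unfolding S2H_def by simp
lemma xi0_S2H: "xi0 (S2H M Y) = bang M (sob Y 0)" unfolding S2H_def by simp

abbreviation "xS m n \<equiv> pair M (sar Y (al1 m n)) (sar Y (al2 m n))"

lemma xS_Ar[simp]: "xS m n \<in> Ar M" by simp
lemma xS_Dom[simp]: "Dom M (xS m n) = sob Y (m + n)" by simp
lemma xS_Cod[simp]: "Cod M (xS m n) = prd M (sob Y m) (sob Y n)" by simp

lemma S_coassoc: "assoc M (sob Y l) (sob Y m) (sob Y n) \<cdot> (tens M (xS l m) (Idm M (sob Y n)) \<cdot> xS (l + m) n) =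
   tens M (Idm M (sob Y l)) (xS m n) \<cdot> xS l (m + n)"
proof (rule prod_eqI[of _ _ "sob Y l" "prd M (sob Y m) (sob Y n)"])
  show "pr2 M (sob Y l) (prd M (sob Y m) (sob Y n)) \<cdot> (assoc M (sob Y l) (sob Y m) (sob Y n) \<cdot> (tens M (xS l m) (Idm M (sob Y n)) \<cdot> xS (l + m) n)) =
    pr2 M (sob Y l) (prd M (sob Y m) (sob Y n)) \<cdot> (tens M (Idm M (sob Y l)) (xS m n) \<cdot> xS l (m + n))"
    by (rule prod_eqI[of _ _ "sob Y m" "sob Y n"]) (simp_all add: pr12_assoc pr22_assoc S_C2 S_C3 add.assoc)
qed (simp_all add: pr1_assoc S_C1 add.assoc)


abbreviation "TT k \<equiv> tupl M (sob Y k) (\<lambda>j. sar Y (beta k j)) k"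

lemma TT_typ: "TT k \<in> Ar M \<and> Dom M (TT k) = sob Y k \<and> Cod M (TT k) = pw M (sob Y 1) k"
  by (rule tupl_typ) (auto simp: dmp_beta)

lemma TT_step: "TT (Suc k) = tens M (TT k) (Idm M (sob Y 1)) \<cdot> xS k 1"
proof -
  have "tens M (TT k) (Idm M (sob Y 1)) \<cdot> xS k 1 = pair M (TT k \<cdot> sar Y (al1 k 1)) (Idm M (sob Y 1) \<cdot> sar Y (al2 k 1))"
    using TT_typ[of k] by (subst tens_pair) simp_all
  also have "\<dots> = pair M (tupl M (sob Y (Suc k)) (\<lambda>j. sar Y (beta k j) \<cdot> sar Y (al1 k 1)) k) (sar Y (beta (Suc k) k))"
    using TT_typ[of k] by (subst tupl_comp[where A="sob Y 1"]) (auto simp: dmp_beta beta2 beta2[unfolded One_nat_def])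
  also have "tupl M (sob Y (Suc k)) (\<lambda>j. sar Y (beta k j) \<cdot> sar Y (al1 k 1)) k = tupl M (sob Y (Suc k)) (\<lambda>j. sar Y (beta (Suc k) j)) k"
  proof (rule tupl_cong)
    fix j assume "j < k"
    then show "sar Y (beta k j) \<cdot> sar Y (al1 k 1) = sar Y (beta (Suc k) j)"
      using sar_comp[of "beta k j" "al1 k 1"] beta1[of j k] by (simp add: dmp_beta)
  qed
  finally show ?thesis by simp
qed

end

locale spc = cwe +
  fixes Y
  assumes hY: "is_special M Y"

sublocale spc \<subseteq> spc0
  using hY unfolding is_special_iff by unfold_locales blast

context spc begin

lemma segal: "tupl M (sob Y n) (\<lambda>j. sar Y (beta n j)) n \<in> Eqv M"
  using hY unfolding is_special_def by blast

lemma TT_Eqv: "TT k \<in> Eqv M" by (rule segal)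

lemma xS_Eqv_1: "xS k 1 \<in> Eqv M"
proof (rule Eqv_cancel[of _ "tens M (TT k) (Idm M (sob Y 1))"])
  show "tens M (TT k) (Idm M (sob Y 1)) \<in> Eqv M" by (rule Eqv_tens[OF TT_Eqv Id_Eqv]) simp
  show "tens M (TT k) (Idm M (sob Y 1)) \<cdot> xS k 1 \<in> Eqv M" using TT_step[of k] TT_Eqv[of "Suc k"] by simp
qed (use TT_typ[of k] in simp_all)

lemma xS_Eqv_0: "xS k 0 \<in> Eqv M"
proof (rule Eqv_cancel[of _ "tens M (Idm M (sob Y k)) (bang M (sob Y 0))"])
  have b: "bang M (sob Y 0) \<in> Eqv M" using TT_Eqv[of 0] by simp
  show "tens M (Idm M (sob Y k)) (bang M (sob Y 0)) \<in> Eqv M" by (rule Eqv_tens[OF Id_Eqv b]) simp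
  have "tens M (Idm M (sob Y k)) (bang M (sob Y 0)) \<cdot> xS k 0 = pair M (Idm M (sob Y k)) (bang M (sob Y k))"
    by (subst tens_pair) (simp_all add: al1_0 bang_comp)
  then show "tens M (Idm M (sob Y k)) (bang M (sob Y 0)) \<cdot> xS k 0 \<in> Eqv M"
    using iso_Eqv[OF pair_id_bang_iso[of "sob Y k"]] by simp
qed simp_all

lemma xS_Eqv: "xS m n \<in> Eqv M"
proof (induction n)
  case 0 then show ?case by (rule xS_Eqv_0)
next
  case (Suc n)
  have a: "assoc M (sob Y m) (sob Y n) (sob Y 1) \<in> Eqv M" by (rule iso_Eqv[OF assoc_iso]) simp_all
  have t: "tens M (xS m n) (Idm M (sob Y 1)) \<in> Eqv M" by (rule Eqv_tens[OF Suc.IH Id_Eqv]) simp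
  have "assoc M (sob Y m) (sob Y n) (sob Y 1) \<cdot> (tens M (xS m n) (Idm M (sob Y 1)) \<cdot> xS (m + n) 1) \<in> Eqv M"
    by (rule Eqv_comp[OF Eqv_comp[OF xS_Eqv_1 t] a]) simp_all
  then have e: "tens M (Idm M (sob Y m)) (xS n 1) \<cdot> xS m (n + 1) \<in> Eqv M" by (simp only: S_coassoc)
  show ?case
  proof (rule Eqv_cancel[of _ "tens M (Idm M (sob Y m)) (xS n 1)"])
    show "tens M (Idm M (sob Y m)) (xS n 1) \<in> Eqv M" by (rule Eqv_tens[OF Id_Eqv xS_Eqv_1]) simp
  qed (use e in simp_all)
qed

lemma S_xi_nat: assumes d: "delta_mor f" "delta_mor g"
  shows "tens M (sar Y (dstar f)) (sar Y (dstar g)) \<cdot> xS (fst f) (fst g) = xS (fst (snd f)) (fst (snd g)) \<cdot> sar Y (dstar (dsum f g))"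
proof (rule prod_eqI[of _ _ "sob Y (fst (snd f))" "sob Y (fst (snd g))"])
  have "pr1 M (sob Y (fst (snd f))) (sob Y (fst (snd g))) \<cdot> (tens M (sar Y (dstar f)) (sar Y (dstar g)) \<cdot> xS (fst f) (fst g))
     = sar Y (dstar f) \<cdot> sar Y (al1 (fst f) (fst g))" using d by simp
  also have "\<dots> = sar Y (al1 (fst (snd f)) (fst (snd g))) \<cdot> sar Y (dstar (dsum f g))" by (rule S_nat1[OF d])
  also have "\<dots> = pr1 M (sob Y (fst (snd f))) (sob Y (fst (snd g))) \<cdot> (xS (fst (snd f)) (fst (snd g)) \<cdot> sar Y (dstar (dsum f g)))"
    using d by simp
  finally show "pr1 M (sob Y (fst (snd f))) (sob Y (fst (snd g))) \<cdot> (tens M (sar Y (dstar f)) (sar Y (dstar g)) \<cdot> xS (fst f) (fst g))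
     = pr1 M (sob Y (fst (snd f))) (sob Y (fst (snd g))) \<cdot> (xS (fst (snd f)) (fst (snd g)) \<cdot> sar Y (dstar (dsum f g)))" .
  have "pr2 M (sob Y (fst (snd f))) (sob Y (fst (snd g))) \<cdot> (tens M (sar Y (dstar f)) (sar Y (dstar g)) \<cdot> xS (fst f) (fst g))
     = sar Y (dstar g) \<cdot> sar Y (al2 (fst f) (fst g))" using d by simp
  also have "\<dots> = sar Y (al2 (fst (snd f)) (fst (snd g))) \<cdot> sar Y (dstar (dsum f g))" by (rule S_nat2[OF d])
  also have "\<dots> = pr2 M (sob Y (fst (snd f))) (sob Y (fst (snd g))) \<cdot> (xS (fst (snd f)) (fst (snd g)) \<cdot> sar Y (dstar (dsum f g)))"
    using d by simp
  finally show "pr2 M (sob Y (fst (snd f))) (sob Y (fst (snd g))) \<cdot> (tens M (sar Y (dstar f)) (sar Y (dstar g)) \<cdot> xS (fst f) (fst g))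
     = pr2 M (sob Y (fst (snd f))) (sob Y (fst (snd g))) \<cdot> (xS (fst (snd f)) (fst (snd g)) \<cdot> sar Y (dstar (dsum f g)))" .
qed (use d in simp_all)

lemma S2H_htymon: "is_htymon M (S2H M Y)"
  unfolding is_htymon_def
proof (intro conjI allI impI)
  fix n show "hob (S2H M Y) n \<in> Ob M" by simp
next
  fix m n l assume "delta_mor (m, n, l)"
  then show "har (S2H M Y) (m, n, l) \<in> hom M (hob (S2H M Y) m) (hob (S2H M Y) n)"
    by (simp add: har_S2H hom_def)
next
  fix t assume "\<not> delta_mor t" then show "har (S2H M Y) t = undefined" unfolding S2H_def by simp
next
  fix n show "har (S2H M Y) (delta_id n) = Idm M (hob (S2H M Y) n)" by (simp add: har_S2H dstar_id)
next
  fix f g :: smor assume a: "delta_mor f \<and> delta_mor g \<and> fst (snd f) = fst g"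
  obtain m n lf where f: "f = (m, n, lf)" by (cases f) auto
  obtain p lg where g: "g = (n, p, lg)" using a f by (cases g) auto
  have "dstar (scomp g f) = scomp (dstar f) (dstar g)" using dstar_scomp[of m n lf p lg] a f g by simp
  then show "har (S2H M Y) (scomp g f) = har (S2H M Y) g \<cdot> har (S2H M Y) f"
    using a sar_comp[of "dstar g" "dstar f"] by (simp add: har_S2H)
next
  fix m n show "xi (S2H M Y) m n \<in> hom M (hob (S2H M Y) (m + n)) (prd M (hob (S2H M Y) m) (hob (S2H M Y) n))"
    by (simp add: xi_S2H hom_def)
next
  show "xi0 (S2H M Y) \<in> hom M (hob (S2H M Y) 0) (one M)" by (simp add: xi0_S2H hom_def)
next
  fix f g :: smor assume a: "delta_mor f \<and> delta_mor g"
  show "tens M (har (S2H M Y) f) (har (S2H M Y) g) \<cdot> xi (S2H M Y) (fst f) (fst g) =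
        xi (S2H M Y) (fst (snd f)) (fst (snd g)) \<cdot> har (S2H M Y) (dsum f g)"
    using a by (simp add: har_S2H xi_S2H S_xi_nat)
next
  fix l m n show "assoc M (hob (S2H M Y) l) (hob (S2H M Y) m) (hob (S2H M Y) n) \<cdot>
          (tens M (xi (S2H M Y) l m) (Idm M (hob (S2H M Y) n)) \<cdot> xi (S2H M Y) (l + m) n) =
          tens M (Idm M (hob (S2H M Y) l)) (xi (S2H M Y) m n) \<cdot> xi (S2H M Y) l (m + n)"
    unfolding xi_S2H hob_S2H by (rule S_coassoc)
next
  fix n show "pr2 M (one M) (hob (S2H M Y) n) \<cdot> (tens M (xi0 (S2H M Y)) (Idm M (hob (S2H M Y) n)) \<cdot> xi (S2H M Y) 0 n) =
         Idm M (hob (S2H M Y) n)"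
    by (simp add: xi_S2H xi0_S2H al2_0)
next
  fix n show "pr1 M (hob (S2H M Y) n) (one M) \<cdot> (tens M (Idm M (hob (S2H M Y) n)) (xi0 (S2H M Y)) \<cdot> xi (S2H M Y) n 0) =
         Idm M (hob (S2H M Y) n)"
    by (simp add: xi_S2H xi0_S2H al1_0)
next
  show "xi0 (S2H M Y) \<in> Eqv M" using TT_Eqv[of 0] by (simp add: xi0_S2H)
next
  fix m n show "xi (S2H M Y) m n \<in> Eqv M" by (simp add: xi_S2H xS_Eqv)
qed

end

context hty begin

lemma har_H2S_dstar: "delta_mor t \<Longrightarrow> sar (H2S M X) (dstar t) = har X t"
proof -
  assume d: "delta_mor t"
  obtain m n l where t: "t = (m, n, l)" by (cases t) auto
  have "sar (H2S M X) (dstar t) = mid M X 1 n 1 \<cdot> har X (dsum ee (dsum t ee))"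
    using d t Gm_dstar[of m n l] by (simp add: sar_H2S)
  also have "\<dots> = har X t \<cdot> mid M X 0 m 0"
    using mid_nat[of ee t ee] d t by simp
  also have "\<dots> = har X t" using d t by (simp add: mid0)
  finally show ?thesis .
qed

lemma sarH_al1: "sar (H2S M X) (al1 m n) = pp1 M X m n"
proof -
  have "sar (H2S M X) (al1 m n) = mid M X 1 m 1 \<cdot> har X (dsum ee (dsum (delta_id m) (cc n)))"
    by (simp add: sar_H2S Gm_al1)
  also have "\<dots> = har X (delta_id m) \<cdot> mid M X 0 m n"
    using mid_nat[of ee "delta_id m" "cc n"] by simp
  also have "\<dots> = pp1 M X m n" unfolding mid_def by (simp add: pp2_0)
  finally show ?thesis .
qed

lemma sarH_al2: "sar (H2S M X) (al2 m n) = pp2 M X m n"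
proof -
  have "sar (H2S M X) (al2 m n) = mid M X 1 n 1 \<cdot> har X (dsum (cc m) (dsum (delta_id n) ee))"
    by (simp add: sar_H2S Gm_al2)
  also have "\<dots> = har X (delta_id n) \<cdot> mid M X m n 0"
    using mid_nat[of "cc m" "delta_id n" ee] by simp
  also have "\<dots> = pp2 M X m n" unfolding mid_def by (simp add: pp1_0)
  finally show ?thesis .
qed

lemma xi_pair: "pair M (pp1 M X m n) (pp2 M X m n) = xi X m n"
  unfolding pp1_def pp2_def by (rule pair_uniq[symmetric]) simp_all

lemma S2H_H2S: "S2H M (H2S M X) = X"
proof (rule colax.equality)
  show "hob (S2H M (H2S M X)) = hob X" unfolding S2H_def by simp
  show "har (S2H M (H2S M X)) = har X"
    unfolding S2H_def by (auto simp: har_H2S_dstar har_undef)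
  show "xi (S2H M (H2S M X)) = xi X"
    unfolding S2H_def by (auto simp: sarH_al1 sarH_al2 xi_pair)
  show "xi0 (S2H M (H2S M X)) = xi0 X"
    unfolding S2H_def by (simp add: xi0_bang)
qed simp

lemma H2S_special0: "is_special0 M (H2S M X)"
  unfolding is_special0_def
proof (intro conjI allI impI)
  fix m n l assume "deltap_mor (m, n, l)"
  then show "sar (H2S M X) (m, n, l) \<in> hom M (sob (H2S M X) n) (sob (H2S M X) m)"
    using sarH_hom[of "(m, n, l)"] by simp
next
  fix t assume "\<not> deltap_mor t" then show "sar (H2S M X) t = undefined" unfolding H2S_def by simp
next
  fix f g assume "deltap_mor f \<and> deltap_mor g \<and> fst (snd f) = fst g"
  then show "sar (H2S M X) (scomp g f) = sar (H2S M X) f \<cdot> sar (H2S M X) g" by (simp add: sarH_comp)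
qed (simp_all add: sarH_id)

lemma H2S_special: "is_special M (H2S M X)"
proof -
  interpret H: spc0 M "H2S M X" by unfold_locales (rule H2S_special0)
  have "tupl M (sob (H2S M X) k) (\<lambda>j. sar (H2S M X) (beta k j)) k \<in> Eqv M" for k
  proof (induction k)
    case 0 then show ?case using xi0_Eqv by (simp add: xi0_bang)
  next
    case (Suc k)
    have x: "pair M (sar (H2S M X) (al1 k 1)) (sar (H2S M X) (al2 k 1)) = xi X k 1"
      by (simp add: sarH_al1 sarH_al2 xi_pair)
    have t: "tens M (tupl M (sob (H2S M X) k) (\<lambda>j. sar (H2S M X) (beta k j)) k) (Idm M (sob (H2S M X) 1)) \<in> Eqv M"
      by (rule Eqv_tens[OF Suc.IH Id_Eqv]) simp
    show ?case unfolding H.TT_step x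
      by (rule Eqv_comp[OF xi_Eqv t]) (use H.TT_typ[of k] in simp)
  qed
  then show ?thesis unfolding is_special_iff using H2S_special0 by blast
qed

end

context spc begin

lemma H2S_S2H: "H2S M (S2H M Y) = Y"
proof -
  interpret X: hty M "S2H M Y" by unfold_locales (rule S2H_htymon)
  have mid: "mid M (S2H M Y) 1 m 1 = sar Y (scomp (al2 1 (m + 1)) (al1 m 1))" for m
    unfolding mid_def pp1_def pp2_def
    using sar_comp[of "al1 m 1" "al2 1 (m + 1)"] by (simp add: xi_S2H)
  show ?thesis
  proof (rule simpobj.equality)
    show "sob (H2S M (S2H M Y)) = sob Y" by simp
    show "sar (H2S M (S2H M Y)) = sar Y"
    proof
      fix t show "sar (H2S M (S2H M Y)) t = sar Y t"
      proof (cases "deltap_mor t")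
        case True
        obtain m n l where t: "t = (m, n, l)" by (cases t) auto
        have "sar (H2S M (S2H M Y)) t = sar Y (scomp (al2 1 (m + 1)) (al1 m 1)) \<cdot> sar Y (dstar (Gm t))"
          using True t by (simp add: X.sar_H2S har_S2H mid[simplified])
        also have "\<dots> = sar Y (scomp (dstar (Gm t)) (scomp (al2 1 (m + 1)) (al1 m 1)))"
          using sar_comp[of "scomp (al2 1 (m + 1)) (al1 m 1)" "dstar (Gm t)"] True t by simp
        also have "\<dots> = sar Y t" using Gm_round[of m n l] True t by simp
        finally show ?thesis .
      next
        case False then show ?thesis unfolding H2S_def by (simp add: sar_undef)
      qed
    qed
  qed simp
qed

end

context cwe begin

lemma H2S_arrow:
  assumes hX: "is_htymon M X" and hX': "is_htymon M X'" and mt: "is_montrans M X X' \<theta>"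
  shows "is_nattrans_sp M (H2S M X) (H2S M X') \<theta>"
proof -
  interpret A: hty M X by unfold_locales (rule hX)
  interpret B: hty M X' by unfold_locales (rule hX')
  have th: "\<theta> n \<in> Ar M" "Dom M (\<theta> n) = hob X n" "Cod M (\<theta> n) = hob X' n" for n
    using mt unfolding is_montrans_def hom_def by auto
  have nat: "\<theta> (fst (snd t)) \<cdot> har X t = har X' t \<cdot> \<theta> (fst t)" if "delta_mor t" for t
    using mt that unfolding is_montrans_def by (cases t) auto
  have xn: "xi X' m n \<cdot> \<theta> (m + n) = tens M (\<theta> m) (\<theta> n) \<cdot> xi X m n" for m n
    using mt unfolding is_montrans_def by auto
  have p1: "\<theta> a \<cdot> pp1 M X a b = pp1 M X' a b \<cdot> \<theta> (a + b)" for a b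
  proof -
    have "pp1 M X' a b \<cdot> \<theta> (a + b) = pr1 M (hob X' a) (hob X' b) \<cdot> (xi X' a b \<cdot> \<theta> (a + b))"
      unfolding pp1_def using th by simp
    also have "\<dots> = pr1 M (hob X' a) (hob X' b) \<cdot> (tens M (\<theta> a) (\<theta> b) \<cdot> xi X a b)" by (simp only: xn)
    also have "\<dots> = \<theta> a \<cdot> pp1 M X a b" unfolding pp1_def using th by simp
    finally show ?thesis by simp
  qed
  have p2: "\<theta> b \<cdot> pp2 M X a b = pp2 M X' a b \<cdot> \<theta> (a + b)" for a b
  proof -
    have "pp2 M X' a b \<cdot> \<theta> (a + b) = pr2 M (hob X' a) (hob X' b) \<cdot> (xi X' a b \<cdot> \<theta> (a + b))"
      unfolding pp2_def using th by simp
    also have "\<dots> = pr2 M (hob X' a) (hob X' b) \<cdot> (tens M (\<theta> a) (\<theta> b) \<cdot> xi X a b)" by (simp only: xn)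
    also have "\<dots> = \<theta> b \<cdot> pp2 M X a b" unfolding pp2_def using th by simp
    finally show ?thesis by simp
  qed
  have md: "\<theta> k \<cdot> mid M X a k c = mid M X' a k c \<cdot> \<theta> (a + (k + c))" for a k c
  proof -
    have "\<theta> k \<cdot> mid M X a k c = (\<theta> k \<cdot> pp1 M X k c) \<cdot> pp2 M X a (k + c)"
      unfolding mid_def using th by simp
    also have "\<dots> = pp1 M X' k c \<cdot> (\<theta> (k + c) \<cdot> pp2 M X a (k + c))" unfolding p1 using th by simp
    also have "\<dots> = mid M X' a k c \<cdot> \<theta> (a + (k + c))" unfolding p2 mid_def using th by simp
    finally show ?thesis .
  qed
  show ?thesis unfolding is_nattrans_sp_def
  proof (intro conjI allI impI)
    fix n show "\<theta> n \<in> hom M (sob (H2S M X) n) (sob (H2S M X') n)" using th by (simp add: hom_def)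
  next
    fix m n l assume d: "deltap_mor (m, n, l)"
    have "\<theta> m \<cdot> sar (H2S M X) (m, n, l) = (\<theta> m \<cdot> mid M X 1 m 1) \<cdot> har X (Gm (m, n, l))"
      using d th by (simp add: A.sar_H2S)
    also have "\<dots> = mid M X' 1 m 1 \<cdot> (\<theta> (Suc (Suc m)) \<cdot> har X (Gm (m, n, l)))"
      unfolding md using d th by simp
    also have "\<dots> = mid M X' 1 m 1 \<cdot> (har X' (Gm (m, n, l)) \<cdot> \<theta> n)"
      using nat[of "Gm (m, n, l)"] d by simp
    also have "\<dots> = sar (H2S M X') (m, n, l) \<cdot> \<theta> n"
      using d th by (simp add: B.sar_H2S)
    finally show "\<theta> m \<cdot> sar (H2S M X) (m, n, l) = sar (H2S M X') (m, n, l) \<cdot> \<theta> n" .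
  qed
qed

lemma S2H_arrow:
  assumes hY: "is_special M Y" and hY': "is_special M Y'" and nt: "is_nattrans_sp M Y Y' \<theta>"
  shows "is_montrans M (S2H M Y) (S2H M Y') \<theta>"
proof -
  interpret A: spc M Y by unfold_locales (rule hY)
  interpret B: spc M Y' by unfold_locales (rule hY')
  have th: "\<theta> n \<in> Ar M" "Dom M (\<theta> n) = sob Y n" "Cod M (\<theta> n) = sob Y' n" for n
    using nt unfolding is_nattrans_sp_def hom_def by auto
  have nat: "\<theta> (fst t) \<cdot> sar Y t = sar Y' t \<cdot> \<theta> (fst (snd t))" if "deltap_mor t" for t
    using nt that unfolding is_nattrans_sp_def by (cases t) auto
  show ?thesis unfolding is_montrans_def
  proof (intro conjI allI impI)
    fix n show "\<theta> n \<in> hom M (hob (S2H M Y) n) (hob (S2H M Y') n)" using th by (simp add: hom_def)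
  next
    fix m n l assume d: "delta_mor (m, n, l)"
    then show "\<theta> n \<cdot> har (S2H M Y) (m, n, l) = har (S2H M Y') (m, n, l) \<cdot> \<theta> m"
      using nat[of "dstar (m, n, l)"] by (simp add: A.har_S2H B.har_S2H)
  next
    fix m n
    show "xi (S2H M Y') m n \<cdot> \<theta> (m + n) = tens M (\<theta> m) (\<theta> n) \<cdot> xi (S2H M Y) m n"
      unfolding A.xi_S2H B.xi_S2H
    proof (rule prod_eqI[of _ _ "sob Y' m" "sob Y' n"])
      show "pr1 M (sob Y' m) (sob Y' n) \<cdot> (B.xS m n \<cdot> \<theta> (m + n)) = pr1 M (sob Y' m) (sob Y' n) \<cdot> (tens M (\<theta> m) (\<theta> n) \<cdot> A.xS m n)"
        using th nat[of "al1 m n"] by simp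
      show "pr2 M (sob Y' m) (sob Y' n) \<cdot> (B.xS m n \<cdot> \<theta> (m + n)) = pr2 M (sob Y' m) (sob Y' n) \<cdot> (tens M (\<theta> m) (\<theta> n) \<cdot> A.xS m n)"
        using th nat[of "al2 m n"] by simp
    qed (use th in simp_all)
  next
    show "xi0 (S2H M Y') \<cdot> \<theta> 0 = xi0 (S2H M Y)"
      using th by (simp add: A.xi0_S2H B.xi0_S2H bang_comp)
  qed
qed

end

theorem corollary3p1p9:
  fixes M :: "('o,'a) cmc"
  assumes "cartesian_with_equivalences M"
  shows "iso_categories (HtyAlg_Mon M) (Special M)"
proof -
  interpret cwe M by unfold_locales (rule assms)
  have hs: "is_special M (H2S M X)" if "is_htymon M X" for X
  proof -
    interpret hty M X by unfold_locales (rule that)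
    show ?thesis by (rule H2S_special)
  qed
  have sh: "is_htymon M (S2H M Y)" if "is_special M Y" for Y
  proof -
    interpret spc M Y by unfold_locales (rule that)
    show ?thesis by (rule S2H_htymon)
  qed
  have r1: "S2H M (H2S M X) = X" if "is_htymon M X" for X
  proof -
    interpret hty M X by unfold_locales (rule that)
    show ?thesis by (rule S2H_H2S)
  qed
  have r2: "H2S M (S2H M Y) = Y" if "is_special M Y" for Y
  proof -
    interpret spc M Y by unfold_locales (rule that)
    show ?thesis by (rule H2S_S2H)
  qed
  have sobH: "sob (H2S M X) = hob X" for X unfolding H2S_def by simp
  have hobS: "hob (S2H M Y) = sob Y" for Y unfolding S2H_def by simp
  show ?thesis unfolding iso_categories_def
  proof (intro exI conjI)
    show "is_functor (HtyAlg_Mon M) (Special M) (H2S M) (\<lambda>(X, X', \<theta>). (H2S M X, H2S M X', \<theta>))"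
      unfolding is_functor_def HtyAlg_Mon_def Special_def
      by (auto simp: hom_def hs H2S_arrow sobH)
    show "is_functor (Special M) (HtyAlg_Mon M) (S2H M) (\<lambda>(Y, Y', \<theta>). (S2H M Y, S2H M Y', \<theta>))"
      unfolding is_functor_def HtyAlg_Mon_def Special_def
      by (auto simp: hom_def sh S2H_arrow hobS)
    show "\<forall>A\<in>Ob (HtyAlg_Mon M). S2H M (H2S M A) = A" unfolding HtyAlg_Mon_def by (auto simp: r1)
    show "\<forall>B\<in>Ob (Special M). H2S M (S2H M B) = B" unfolding Special_def by (auto simp: r2)
    show "\<forall>f\<in>Ar (HtyAlg_Mon M). (\<lambda>(Y, Y', \<theta>). (S2H M Y, S2H M Y', \<theta>)) ((\<lambda>(X, X', \<theta>). (H2S M X, H2S M X', \<theta>)) f) = f"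
      unfolding HtyAlg_Mon_def by (auto simp: r1)
    show "\<forall>g\<in>Ar (Special M). (\<lambda>(X, X', \<theta>). (H2S M X, H2S M X', \<theta>)) ((\<lambda>(Y, Y', \<theta>). (S2H M Y, S2H M Y', \<theta>)) g) = g"
      unfolding Special_def by (auto simp: r2)
  qed
qed


end
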